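(* For all radial $\mathbf u=(u_1,u_2),\mathbf v=(v_1,v_2)\in C^\infty(\overline{\mathbb B^6_1})\times C^\infty(\overline{\mathbb B^6_1})$, \[\|\mathbf N(\mathbf u)\|_{\mathcal H}\lesssim\|u_1\|^2_{L^{12}}+\|u_1\|^3_{L^9}+\|u_1\|^4_{L^8}+\|u_1'\|^2_{L^4}\] and \begin{align*}\|\mathbf N(\mathbf u)-\mathbf N(\mathbf v)\|_{\mathcal H}\lesssim{}&\|u_1-v_1\|_{L^{12}}\Big(\|u_1\|_{L^{12}}+\|v_1\|_{L^{12}}+\|u_1\|^2_{L^8}+\|v_1\|^2_{L^8}+\|u_1'\|_{L^4}\big(1+\|u_1\|_{L^6}+\|v_1\|_{L^6}\big)\\&+\|u_1\|^3_{L^{36/5}}+\|v_1\|^3_{L^{36/5}}\Big)+\|u_1'-v_1'\|_{L^4}\big(\|v_1\|_{L^{12}}+\|v_1\|^2_{L^8}\big),\end{align*} where all Lebesgue norms are over $\mathbb B^6_1$.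
   Context: Radial functions on $\mathbb B^6_1=\{x\in\mathbb R^6:|x|<1\}$ are identified with their profiles in $\rho=|x|$, and $'$ denotes $\partial_\rho$. $\mathcal H$ is the space of radial pairs in $H^2(\mathbb B^6_1)\times H^1(\mathbb B^6_1)$ with the standard norm. For a function $u$, $N(u)(\rho)=-\frac{3\sin(2\rho u(\rho))-6\rho u(\rho)}{2\rho^3}$; $\psi_{*1}(\rho)=\frac{2}{\rho}\arctan\frac{\rho}{\sqrt2}$; and \[\mathbf N(\mathbf u)(\rho)=\begin{pmatrix}0\\ N(\psi_{*1}+u_1)(\rho)-N(\psi_{*1})(\rho)-\frac{48}{(\rho^2+2)^2}u_1(\rho)\end{pmatrix}.\] *)

theory Defs
  imports "HOL-Analysis.Analysis"
begin

fun Dirs :: "'a::real_normed_vector list \<Rightarrow> ('a \<Rightarrow> real) \<Rightarrow> 'a \<Rightarrow> real" where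
  "Dirs [] f = f"
| "Dirs (e # es) f = (\<lambda>x. deriv (\<lambda>t. Dirs es f (x + t *\<^sub>R e)) 0)"

definition smooth_on :: "'a::real_normed_vector set \<Rightarrow> ('a \<Rightarrow> real) \<Rightarrow> bool" where
  "smooth_on S f \<longleftrightarrow> open S \<and>
     (\<forall>es. continuous_on S (Dirs es f) \<and>
       (\<forall>e. \<forall>x\<in>S. (\<lambda>t. Dirs es f (x + t *\<^sub>R e)) differentiable (at 0)))"

(* a profile u gives a function in C^\<infinity>(closed unit ball of R^6): x \<mapsto> u |x| is smooth
   on an open neighbourhood of the closed ball *)
definition smooth_radial :: "(real \<Rightarrow> real) \<Rightarrow> bool" where
  "smooth_radial u \<longleftrightarrow> (\<exists>S. cball (0::real^6) 1 \<subseteq> S \<and> smooth_on S (\<lambda>x. u (norm x)))"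

definition Lp :: "real \<Rightarrow> (real \<Rightarrow> real) \<Rightarrow> real" where
  "Lp p f = (LINT x : ball (0::real^6) 1 | lborel. \<bar>f (norm x)\<bar> powr p) powr (1 / p)"

(* H^1(B^6_1) norm squared of a radial function with profile g: |\<nabla>G| = |g'| *)
definition H1sq :: "(real \<Rightarrow> real) \<Rightarrow> real" where
  "H1sq g = (LINT x : ball (0::real^6) 1 | lborel.
      (g (norm x))^2 + (deriv g (norm x))^2)"

(* H^2(B^6_1) norm squared of a radial function with profile f:
   |D^2 F|^2 = f''^2 + 5 (f'/\<rho>)^2 in dimension 6 *)
definition H2sq :: "(real \<Rightarrow> real) \<Rightarrow> real" where
  "H2sq f = (LINT x : ball (0::real^6) 1 | lborel.
      (f (norm x))^2 + (deriv f (norm x))^2 + (deriv (deriv f) (norm x))^2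
      + 5 * (deriv f (norm x) / norm x)^2)"

definition Hnorm :: "(real \<Rightarrow> real) \<times> (real \<Rightarrow> real) \<Rightarrow> real" where
  "Hnorm w = sqrt (H2sq (fst w) + H1sq (snd w))"

definition pdiff :: "(real \<Rightarrow> real) \<times> (real \<Rightarrow> real) \<Rightarrow> (real \<Rightarrow> real) \<times> (real \<Rightarrow> real)
    \<Rightarrow> (real \<Rightarrow> real) \<times> (real \<Rightarrow> real)" where
  "pdiff w z = ((\<lambda>r. fst w r - fst z r), (\<lambda>r. snd w r - snd z r))"

definition Nf :: "(real \<Rightarrow> real) \<Rightarrow> real \<Rightarrow> real" where
  "Nf u \<rho> = - (3 * sin (2 * \<rho> * u \<rho>) - 6 * \<rho> * u \<rho>) / (2 * \<rho>^3)"

definition psi1 :: "real \<Rightarrow> real" where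
  "psi1 \<rho> = 2 / \<rho> * arctan (\<rho> / sqrt 2)"

definition Nvec :: "(real \<Rightarrow> real) \<times> (real \<Rightarrow> real) \<Rightarrow> (real \<Rightarrow> real) \<times> (real \<Rightarrow> real)" where
  "Nvec w = ((\<lambda>\<rho>. 0),
     (\<lambda>\<rho>. Nf (\<lambda>r. psi1 r + fst w r) \<rho> - Nf psi1 \<rho> - 48 / (\<rho>^2 + 2)^2 * fst w \<rho>))"

end

theory Submission
  imports Defs "HOL-Analysis.Analysis"
begin


lemma mvt_bound:
  fixes f f' :: "real \<Rightarrow> real"
  assumes d: "\<And>z. (f has_real_derivative f' z) (at z)"
    and B: "\<And>z. \<bar>z\<bar> \<le> T \<Longrightarrow> \<bar>f' z\<bar> \<le> B"
    and x: "\<bar>x\<bar> \<le> T" and y: "\<bar>y\<bar> \<le> T"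
  shows "\<bar>f x - f y\<bar> \<le> B * \<bar>x - y\<bar>"
proof -
  have "norm (f x - f y) \<le> B * norm (x - y)"
    apply (rule field_differentiable_bound[of "{-T..T}"])
    using d B x y by (auto intro: has_field_derivative_at_within)
  thus ?thesis by simp
qed

lemma mvt0:
  fixes f f' :: "real \<Rightarrow> real"
  assumes d: "\<And>z. (f has_real_derivative f' z) (at z)"
    and B: "\<And>z. \<bar>z\<bar> \<le> \<bar>t\<bar> \<Longrightarrow> \<bar>f' z\<bar> \<le> B"
    and "f 0 = 0"
  shows "\<bar>f t\<bar> \<le> B * \<bar>t\<bar>"
  using mvt_bound[of f f' "\<bar>t\<bar>" B t 0] assms by auto

lemma tI1: "\<bar>sin t\<bar> \<le> \<bar>t\<bar>" for t :: real
  by (simp add: abs_sin_x_le_abs_x)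

lemma tI2: "\<bar>cos t - 1\<bar> \<le> t^2" for t :: real
proof -
  have "\<bar>(cos t - 1) - (cos 0 - 1)\<bar> \<le> \<bar>t\<bar> * \<bar>t - 0\<bar>"
    by (rule mvt_bound[where f'="\<lambda>z. - sin z" and T="\<bar>t\<bar>"])
       (auto intro!: derivative_eq_intros intro: order_trans[OF tI1])
  thus ?thesis by (simp add: power2_eq_square abs_mult)
qed

lemma tI3: "\<bar>sin t - t\<bar> \<le> \<bar>t\<bar>^3" for t :: real
proof -
  have "\<bar>(sin t - t) - (sin 0 - 0)\<bar> \<le> t^2 * \<bar>t - 0\<bar>"
  proof (rule mvt_bound[where f'="\<lambda>z. cos z - 1" and T="\<bar>t\<bar>"])
    fix z :: real assume "\<bar>z\<bar> \<le> \<bar>t\<bar>"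
    hence "z^2 \<le> t^2" by (metis abs_le_square_iff)
    thus "\<bar>cos z - 1\<bar> \<le> t^2" using tI2[of z] by linarith
  qed (auto intro!: derivative_eq_intros)
  thus ?thesis by (simp add: power2_eq_square power3_eq_cube abs_mult)
qed

lemma tI4: "\<bar>t * cos t - sin t\<bar> \<le> \<bar>t\<bar>^3" for t :: real
proof -
  have "\<bar>(t * cos t - sin t) - (0 * cos 0 - sin 0)\<bar> \<le> t^2 * \<bar>t - 0\<bar>"
  proof (rule mvt_bound[where f'="\<lambda>z. - (z * sin z)" and T="\<bar>t\<bar>"])
    fix z :: real assume "\<bar>z\<bar> \<le> \<bar>t\<bar>"
    hence "\<bar>z * sin z\<bar> \<le> \<bar>t\<bar> * \<bar>t\<bar>" unfolding abs_mult
      by (intro mult_mono tI1[THEN order_trans]) auto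
    thus "\<bar>- (z * sin z)\<bar> \<le> t^2" by (simp add: power2_eq_square)
  qed (auto intro!: derivative_eq_intros)
  thus ?thesis by (simp add: power2_eq_square power3_eq_cube abs_mult)
qed

lemma tI5a: "\<bar>t * sin t + 2 * cos t - 2\<bar> \<le> t^4" for t :: real
proof -
  have "\<bar>(t * sin t + 2 * cos t - 2) - (0 * sin 0 + 2 * cos 0 - 2)\<bar> \<le> \<bar>t\<bar>^3 * \<bar>t - 0\<bar>"
  proof (rule mvt_bound[where f'="\<lambda>z. z * cos z - sin z" and T="\<bar>t\<bar>"])
    fix z :: real assume "\<bar>z\<bar> \<le> \<bar>t\<bar>"
    hence "\<bar>z\<bar>^3 \<le> \<bar>t\<bar>^3" by (simp add: power_mono)
    thus "\<bar>z * cos z - sin z\<bar> \<le> \<bar>t\<bar>^3" using tI4[of z] by linarith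
  qed (auto intro!: derivative_eq_intros)
  thus ?thesis by (simp add: power_mult_distrib power4_eq_xxxx power3_eq_cube abs_mult)
qed

lemma tI5: "\<bar>t * sin t + 2 * cos t - 2\<bar> \<le> 5 * \<bar>t\<bar>^3" for t :: real
proof (cases "\<bar>t\<bar> \<le> 1")
  case True
  have "t^4 = \<bar>t\<bar>^3 * \<bar>t\<bar>" by (simp add: power4_eq_xxxx power3_eq_cube)
  also have "\<dots> \<le> \<bar>t\<bar>^3 * 1" using True by (intro mult_left_mono) auto
  finally show ?thesis using tI5a[of t] by simp
next
  case False
  have a: "\<bar>t * sin t + 2 * cos t - 2\<bar> \<le> \<bar>t\<bar> + 4"
  proof -
    have "\<bar>t * sin t\<bar> \<le> \<bar>t\<bar>" unfolding abs_mult
      using abs_sin_le_one[of t] by (simp add: mult_left_le)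
    thus ?thesis using abs_cos_le_one[of t] by arith
  qed
  have h: "1 \<le> \<bar>t\<bar>" using False by simp
  have "\<bar>t\<bar>^1 \<le> \<bar>t\<bar>^3" by (rule power_increasing) (use h in auto)
  moreover have "1 \<le> \<bar>t\<bar>^3" by (rule one_le_power) (rule h)
  ultimately show ?thesis using a by simp
qed

lemma tI6a: "\<bar>t * cos t - 3 * sin t + 2 * t\<bar> \<le> \<bar>t\<bar>^5" for t :: real
proof -
  have "\<bar>(t * cos t - 3 * sin t + 2 * t) - (0 * cos 0 - 3 * sin 0 + 2 * 0)\<bar> \<le> t^4 * \<bar>t - 0\<bar>"
  proof (rule mvt_bound[where f'="\<lambda>z. - (z * sin z + 2 * cos z - 2)" and T="\<bar>t\<bar>"])
    fix z :: real assume "\<bar>z\<bar> \<le> \<bar>t\<bar>"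
    hence "\<bar>z\<bar>^4 \<le> \<bar>t\<bar>^4" by (intro power_mono) auto
    hence "z^4 \<le> t^4" by (simp add: power_even_abs)
    thus "\<bar>- (z * sin z + 2 * cos z - 2)\<bar> \<le> t^4" using tI5a[of z] by simp
  next
    fix z :: real show "((\<lambda>t. t * cos t - 3 * sin t + 2 * t) has_real_derivative - (z * sin z + 2 * cos z - 2)) (at z)"
      by (auto intro!: derivative_eq_intros simp: algebra_simps)
  qed auto
  moreover have "t^4 * \<bar>t\<bar> = \<bar>t\<bar>^5" by (cases "t \<ge> 0") (simp_all add: eval_nat_numeral)
  ultimately show ?thesis by simp
qed

lemma tI6: "\<bar>t * cos t - 3 * sin t + 2 * t\<bar> \<le> 6 * t^4" for t :: real
proof (cases "\<bar>t\<bar> \<le> 1")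
  case True
  have "\<bar>t\<bar>^5 = t^4 * \<bar>t\<bar>" by (cases "t \<ge> 0") (simp_all add: eval_nat_numeral)
  also have "\<dots> \<le> t^4 * 1" using True by (intro mult_left_mono) auto
  finally show ?thesis using tI6a[of t] by simp
next
  case False
  have a: "\<bar>t * cos t - 3 * sin t + 2 * t\<bar> \<le> 3 * \<bar>t\<bar> + 3"
  proof -
    have "\<bar>t * cos t\<bar> \<le> \<bar>t\<bar>" unfolding abs_mult
      using abs_cos_le_one[of t] by (simp add: mult_left_le)
    thus ?thesis using abs_sin_le_one[of t] by arith
  qed
  have h: "1 \<le> \<bar>t\<bar>" using False by simp
  have "\<bar>t\<bar>^1 \<le> \<bar>t\<bar>^4" by (rule power_increasing) (use h in auto)
  moreover have "\<bar>t\<bar>^4 = t^4" by (simp add: power_even_abs)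
  moreover have "1 \<le> \<bar>t\<bar>^4" by (rule one_le_power) (rule h)
  ultimately have "\<bar>t\<bar> \<le> t^4" "1 \<le> t^4" by auto
  then show ?thesis using a by linarith
qed


definition PP :: "real \<Rightarrow> real" where "PP r = 4* sqrt 2*(2 - r^2)/(2+r^2)^2"
definition QQ :: "real \<Rightarrow> real" where "QQ r = (r^4 - 12*r^2 + 4)/(2+r^2)^2"
definition PP' :: "real \<Rightarrow> real" where "PP' r = -8* sqrt 2*r*(6 - r^2)/(2+r^2)^3"
definition QQ' :: "real \<Rightarrow> real" where "QQ' r = -32*r*(2-r^2)/(2+r^2)^3"

lemma PP_deriv: "(PP has_real_derivative PP' r) (at r)"
proof -
  have "(2+r^2) \<noteq> 0" by (smt (verit) zero_le_power2)
  thus ?thesis unfolding PP_def[abs_def] PP'_def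
    apply (auto intro!: derivative_eq_intros)
    apply (simp add: field_simps)
    apply algebra
    done
qed

lemma QQ_deriv: "(QQ has_real_derivative QQ' r) (at r)"
proof -
  have "(2+r^2) \<noteq> 0" by (smt (verit) zero_le_power2)
  thus ?thesis unfolding QQ_def[abs_def] QQ'_def
    apply (auto intro!: derivative_eq_intros)
    apply (simp add: field_simps)
    apply algebra
    done
qed

lemma trig_a:
  fixes r :: real assumes "r \<noteq> 0"
  shows "sin (2*r*psi1 r) = r * PP r" "cos (2*r*psi1 r) = QQ r"
proof -
  have q2: "sqrt 2 * sqrt 2 = 2" by simp
  define t where "t = sqrt 2 * r / 2"
  have tt: "r / sqrt 2 = t" unfolding t_def using q2 by (simp add: field_simps)
  define th where "th = arctan t"
  have a: "2*r*psi1 r = 2*(2*th)" using assms unfolding psi1_def th_def tt by simp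
  have pos: "1 + t^2 > 0" by (smt (verit) zero_le_power2)
  have s: "sin th = t / sqrt (1+t^2)" and c: "cos th = 1 / sqrt (1+t^2)"
    unfolding th_def by (simp_all add: sin_arctan cos_arctan)
  have sq: "sqrt (1+t^2) ^2 = 1 + t^2" using pos by simp
  have s2: "sin (2*th) = 2*t/(1+t^2)" unfolding sin_double s c
    using sq pos by (simp add: field_simps power2_eq_square)
  have c2: "cos (2*th) = (1-t^2)/(1+t^2)" unfolding cos_double s c
    using sq pos by (simp add: field_simps power_divide)
  have t2: "t^2 = r^2/2" unfolding t_def using q2 by (simp add: power2_eq_square)
  have d: "2 + r^2 > 0" by (smt (verit) zero_le_power2)
  have s2': "sin (2*th) = 2 * sqrt 2 * r / (2 + r^2)"
    unfolding s2 t2 using d by (simp add: field_simps t_def)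
  have c2': "cos (2*th) = (2 - r^2)/(2+r^2)" unfolding c2 t2 using d by (simp add: field_simps)
  show "sin (2*r*psi1 r) = r * PP r" unfolding a sin_double[of "2*th"] s2' c2' PP_def
    using d by (simp add: field_simps power2_eq_square)
  have "cos (2*r*psi1 r) = ((2 - r^2)/(2+r^2))^2 - (2 * sqrt 2 * r / (2 + r^2))^2"
    unfolding a cos_double[of "2*th"] s2' c2' ..
  also have "\<dots> = (2 - r^2)^2/(2+r^2)^2 - (8*r^2)/(2+r^2)^2"
  proof -
    have e1: "(2 * sqrt 2 * r)^2 = 8*r^2" by (simp add: power_mult_distrib)
    show ?thesis by (simp only: power_divide e1)
  qed
  also have "\<dots> = ((2 - r^2)^2 - 8 * r^2) / (2+r^2)^2"
    by (rule diff_divide_distrib[symmetric])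
  also have "\<dots> = QQ r" unfolding QQ_def by (simp add: power2_eq_square power4_eq_xxxx algebra_simps)
  finally show "cos (2*r*psi1 r) = QQ r" .
qed


definition "Af r x = (cos(2*r*x) - 1)/r^2"
definition "Bf r x = (sin(2*r*x) - 2*r*x)/r^3"
definition "Ax r x = -2* sin(2*r*x)/r"
definition "Bx r x = 2*(cos(2*r*x) - 1)/r^2"
definition "Ar r x = -(2*r*x* sin(2*r*x) + 2*cos(2*r*x) - 2)/r^3"
definition "Br r x = (2*r*x*cos(2*r*x) - 3* sin(2*r*x) + 2*(2*r*x))/r^4"
definition gf :: "(real \<Rightarrow> real) \<Rightarrow> real \<Rightarrow> real" where
  "gf u r = -3/2*(PP r * Af r (u r) + QQ r * Bf r (u r))"
definition "gd r x dx = -3/2*(PP' r*Af r x + PP r*(Ar r x + Ax r x*dx) + QQ' r*Bf r x + QQ r*(Br r x + Bx r x*dx))"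

lemma Nvec_eq:
  assumes r: "r \<noteq> 0"
  shows "snd (Nvec w) r = gf (fst w) r"
proof -
  define x where "x = fst w r"
  define S where "S = sin(2*r*x)"
  define C where "C = cos(2*r*x)"
  have e: "sin (2 * r * (psi1 r + x)) = r * PP r * C + QQ r * S"
    unfolding S_def C_def using trig_a[OF r]
    by (simp add: distrib_left sin_add)
  have e2: "sin (2 * r * psi1 r) = r * PP r" using trig_a[OF r] by simp
  have d: "2 + r^2 > 0" by (smt (verit) zero_le_power2)
  have "snd (Nvec w) r = - (3 * sin (2 * r * (psi1 r + x)) - 6 * r * (psi1 r + x)) / (2 * r ^ 3)
      + (3 * sin (2 * r * psi1 r) - 6 * r * psi1 r) / (2 * r ^ 3) - 48 / (r^2 + 2)^2 * x"
    unfolding Nvec_def Nf_def x_def using r by (simp add: field_simps)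
  also have "\<dots> = - (3 * (r * PP r * C + QQ r * S) - 6 * r * (psi1 r + x)) / (2 * r ^ 3)
      + (3 * (r * PP r) - 6 * r * psi1 r) / (2 * r ^ 3) - 48 / (r^2 + 2)^2 * x"
    unfolding e e2 ..
  also have "\<dots> = - (3 * (r * PP r * C + QQ r * S) - 6 * r * (psi1 r + x)) / (2 * r ^ 3)
      + (3 * (r * PP r) - 6 * r * psi1 r) / (2 * r ^ 3) - 3*(1 - QQ r)/r^2 * x"
  proof -
    have "48 / (r^2 + 2)^2 = 3*(1 - QQ r)/r^2"
      unfolding QQ_def using r d by (simp add: field_simps) (simp add: algebra_simps eval_nat_numeral)
    thus ?thesis by simp
  qed
  also have "\<dots> = -3/2*(PP r * ((C - 1)/r^2) + QQ r * ((S - 2*r*x)/r^3))"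
    using r by (simp add: field_simps) (simp add: algebra_simps eval_nat_numeral)
  also have "\<dots> = gf (fst w) r" unfolding gf_def Af_def Bf_def S_def C_def x_def ..
  finally show ?thesis .
qed

lemma Af_deriv:
  assumes r: "r \<noteq> 0" and du: "(u has_real_derivative du) (at r)"
  shows "((\<lambda>s. Af s (u s)) has_real_derivative Ar r (u r) + Ax r (u r)*du) (at r)"
  unfolding Af_def[abs_def]
  apply (rule derivative_eq_intros refl du | simp add: r)+
  unfolding Ar_def Ax_def using r by (simp add: field_simps) (simp add: algebra_simps eval_nat_numeral)

lemma Bf_deriv:
  assumes r: "r \<noteq> 0" and du: "(u has_real_derivative du) (at r)"
  shows "((\<lambda>s. Bf s (u s)) has_real_derivative Br r (u r) + Bx r (u r)*du) (at r)"
  unfolding Bf_def[abs_def]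
  apply (rule derivative_eq_intros refl du | simp add: r)+
  unfolding Br_def Bx_def using r by (simp add: field_simps) (simp add: algebra_simps eval_nat_numeral)

lemma gf_deriv:
  assumes r: "r \<noteq> 0" and du: "(u has_real_derivative du) (at r)"
  shows "(gf u has_real_derivative gd r (u r) du) (at r)"
  unfolding gf_def[abs_def]
  apply (rule derivative_eq_intros refl PP_deriv QQ_deriv Af_deriv[OF r du] Bf_deriv[OF r du])+
  unfolding gd_def by (simp add: algebra_simps)


lemma abs_mult_le: "\<bar>a\<bar> \<le> A \<Longrightarrow> \<bar>b\<bar> \<le> B \<Longrightarrow> \<bar>a*b\<bar> \<le> A*(B::real)"
  unfolding abs_mult by (rule mult_mono) auto

lemma PQ_bounds:
  fixes r :: real assumes "0 \<le> r" "r \<le> 1"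
  shows "\<bar>PP r\<bar> \<le> 20" "\<bar>QQ r\<bar> \<le> 20" "\<bar>PP' r\<bar> \<le> 20" "\<bar>QQ' r\<bar> \<le> 20"
proof -
  have r2: "r^2 \<le> 1" "0 \<le> r^2" using assms by (auto simp: power_le_one)
  have b2: "2 \<le> 2 + r^2" using r2 by simp
  have D2: "4 \<le> (2+r^2)^2" unfolding power2_eq_square[of "2+r^2"]
    using mult_mono[OF b2 b2] by simp
  have D3: "8 \<le> (2+r^2)^3" unfolding power3_eq_cube
    using mult_mono[OF mult_mono[OF b2 b2] b2] by simp
  have s2: "sqrt 2 \<le> 2" by (smt (verit) real_sqrt_le_iff real_sqrt_four real_sqrt_le_mono)
  have s0: "0 \<le> sqrt 2" by simp
  have r4: "r^4 \<le> 1" "0 \<le> r^4" using assms by (auto simp: power_le_one)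
  have g: "\<bar>N / D\<bar> \<le> 20" if "\<bar>N\<bar> \<le> 20 * D" "0 < D" for N D :: real
    using that by (simp add: abs_divide pos_divide_le_eq)
  show "\<bar>PP r\<bar> \<le> 20" unfolding PP_def
  proof (rule g)
    have "\<bar>4 * sqrt 2 * (2 - r^2)\<bar> \<le> 4 * 2 * 2" unfolding abs_mult
      using r2 s2 by (intro mult_mono) auto
    thus "\<bar>4 * sqrt 2 * (2 - r^2)\<bar> \<le> 20 * (2+r^2)^2" using D2 by linarith
  qed (use D2 in linarith)
  show "\<bar>QQ r\<bar> \<le> 20" unfolding QQ_def
  proof (rule g)
    have "\<bar>r^4 - 12*r^2 + 4\<bar> \<le> 17" using r2 r4 by arith
    thus "\<bar>r^4 - 12*r^2 + 4\<bar> \<le> 20 * (2+r^2)^2" using D2 by linarith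
  qed (use D2 in linarith)
  show "\<bar>PP' r\<bar> \<le> 20" unfolding PP'_def
  proof (rule g)
    have "\<bar>-8 * sqrt 2 * r * (6 - r^2)\<bar> \<le> 8 * 2 * 1 * 6" unfolding abs_mult
      using r2 s2 assms by (intro mult_mono) auto
    thus "\<bar>-8 * sqrt 2 * r * (6 - r^2)\<bar> \<le> 20 * (2+r^2)^3" using D3 by linarith
  qed (use D3 in linarith)
  show "\<bar>QQ' r\<bar> \<le> 20" unfolding QQ'_def
  proof (rule g)
    have "\<bar>-32 * r * (2 - r^2)\<bar> \<le> 32 * 1 * 2" unfolding abs_mult
      using r2 assms by (intro mult_mono) auto
    thus "\<bar>-32 * r * (2 - r^2)\<bar> \<le> 20 * (2+r^2)^3" using D3 by linarith
  qed (use D3 in linarith)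
qed


lemma scale_bd:
  fixes r F c x :: real assumes r: "r > 0" and F: "\<bar>F\<bar> \<le> c * \<bar>2*r*x\<bar>^k"
  shows "\<bar>F / r^k\<bar> \<le> c * 2^k * \<bar>x\<bar>^k"
proof -
  have "\<bar>2*r*x\<bar>^k = 2^k * \<bar>x\<bar>^k * r^k" using r by (simp add: abs_mult power_mult_distrib)
  hence "\<bar>F\<bar> \<le> (c * 2^k * \<bar>x\<bar>^k) * r^k" using F by (simp add: algebra_simps)
  thus ?thesis using r by (simp add: abs_divide pos_divide_le_eq)
qed

context fixes r :: real assumes r0: "0 < r" and r1: "r \<le> 1"
begin

lemma Af_bd: "\<bar>Af r x\<bar> \<le> 4 * \<bar>x\<bar>^2"
  unfolding Af_def using scale_bd[OF r0, of "cos (2*r*x) - 1" 1 x 2] tI2[of "2*r*x"] by simp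

lemma Bf_bd: "\<bar>Bf r x\<bar> \<le> 8 * \<bar>x\<bar>^3"
  unfolding Bf_def using scale_bd[OF r0, of "sin (2*r*x) - 2*r*x" 1 x 3] tI3[of "2*r*x"] by simp

lemma Ax_bd: "\<bar>Ax r x\<bar> \<le> 4 * \<bar>x\<bar>"
proof -
  have "\<bar>sin (2*r*x) / r^1\<bar> \<le> 1 * 2^1 * \<bar>x\<bar>^1"
    using scale_bd[OF r0, of "sin (2*r*x)" 1 x 1] tI1[of "2*r*x"] by simp
  thus ?thesis unfolding Ax_def by (simp add: abs_divide abs_mult)
qed

lemma Bx_bd: "\<bar>Bx r x\<bar> \<le> 8 * \<bar>x\<bar>^2"
proof -
  define q where "q = (cos (2*r*x) - 1) / r^2"
  have "\<bar>q\<bar> \<le> 1 * 2^2 * \<bar>x\<bar>^2"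
    unfolding q_def using scale_bd[OF r0, of "cos (2*r*x) - 1" 1 x 2] tI2[of "2*r*x"] by simp
  moreover have "Bx r x = 2 * q" unfolding Bx_def q_def by (simp only: times_divide_eq_right)
  ultimately show ?thesis by (simp add: abs_mult)
qed

lemma Ar_bd: "\<bar>Ar r x\<bar> \<le> 40 * \<bar>x\<bar>^3"
proof -
  define q where "q = (2*r*x * sin (2*r*x) + 2 * cos (2*r*x) - 2) / r^3"
  have "\<bar>q\<bar> \<le> 5 * 2^3 * \<bar>x\<bar>^3"
    unfolding q_def using scale_bd[OF r0, of "2*r*x * sin (2*r*x) + 2 * cos (2*r*x) - 2" 5 x 3] tI5[of "2*r*x"] by simp
  moreover have "Ar r x = - q" unfolding Ar_def q_def by (simp only: minus_divide_left)
  ultimately show ?thesis by simp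
qed

lemma Br_bd: "\<bar>Br r x\<bar> \<le> 96 * \<bar>x\<bar>^4"
proof -
  have "\<bar>2*r*x * cos (2*r*x) - 3 * sin (2*r*x) + 2*(2*r*x)\<bar> \<le> 6 * \<bar>2*r*x\<bar>^4"
    using tI6[of "2*r*x"] by (simp add: power_even_abs)
  from scale_bd[OF r0 this] show ?thesis unfolding Br_def by simp
qed

lemma Af_dx: "((\<lambda>s. Af r s) has_real_derivative Ax r z) (at z)"
  unfolding Af_def Ax_def using r0 by (auto intro!: derivative_eq_intros simp: field_simps power2_eq_square)

lemma Bf_dx: "((\<lambda>s. Bf r s) has_real_derivative Bx r z) (at z)"
  unfolding Bf_def Bx_def using r0 by (auto intro!: derivative_eq_intros simp: field_simps power2_eq_square power3_eq_cube)

lemma Ax_dx: "((\<lambda>s. Ax r s) has_real_derivative -4 * cos (2*r*z)) (at z)"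
  unfolding Ax_def using r0 by (auto intro!: derivative_eq_intros simp: field_simps)

lemma Bx_dx: "((\<lambda>s. Bx r s) has_real_derivative -4 * sin (2*r*z) / r) (at z)"
  unfolding Bx_def using r0 by (auto intro!: derivative_eq_intros simp: field_simps power2_eq_square)

lemma Ar_dx: "((\<lambda>s. Ar r s) has_real_derivative -2 * (2*r*z * cos (2*r*z) - sin (2*r*z)) / r^2) (at z)"
  unfolding Ar_def using r0 by (auto intro!: derivative_eq_intros simp: field_simps) (simp add: algebra_simps eval_nat_numeral)

lemma Br_dx: "((\<lambda>s. Br r s) has_real_derivative -2 * (2*r*z * sin (2*r*z) + 2 * cos (2*r*z) - 2) / r^3) (at z)"
  unfolding Br_def using r0 by (auto intro!: derivative_eq_intros simp: field_simps) (simp add: algebra_simps eval_nat_numeral)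

end


lemma T2_le: "(\<bar>x\<bar> + \<bar>y\<bar>)^2 \<le> 2 * (\<bar>x\<bar>^2 + \<bar>y\<bar>^2)" for x y :: real
proof -
  have "2 * (\<bar>x\<bar>^2 + \<bar>y\<bar>^2) - (\<bar>x\<bar> + \<bar>y\<bar>)^2 = (\<bar>x\<bar> - \<bar>y\<bar>)^2"
    by (simp add: power2_eq_square algebra_simps)
  thus ?thesis by (metis diff_ge_0_iff_ge zero_le_power2)
qed

lemma T3_le: "(\<bar>x\<bar> + \<bar>y\<bar>)^3 \<le> 4 * (\<bar>x\<bar>^3 + \<bar>y\<bar>^3)" for x y :: real
proof -
  define a where "a = \<bar>x\<bar>" define b where "b = \<bar>y\<bar>"
  have a: "a \<ge> 0" "b \<ge> 0" unfolding a_def b_def by auto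
  have "4 * (a^3 + b^3) - (a+b)^3 = 3 * (a + b) * (a - b)^2"
    by (simp add: power2_eq_square power3_eq_cube algebra_simps)
  also have "\<dots> \<ge> 0" using a by simp
  finally show ?thesis unfolding a_def[symmetric] b_def[symmetric] by simp
qed

context fixes r :: real assumes r0: "0 < r" and r1: "r \<le> 1"
begin

lemma mvtT:
  assumes "\<And>z. ((\<lambda>s. F s) has_real_derivative F' z) (at z)"
    and "\<And>z. \<bar>z\<bar> \<le> \<bar>x\<bar> + \<bar>y\<bar> \<Longrightarrow> \<bar>F' z\<bar> \<le> B"
  shows "\<bar>F x - F y\<bar> \<le> B * \<bar>x - y\<bar>"
  using mvt_bound[of F F' "\<bar>x\<bar> + \<bar>y\<bar>" B x y] assms by auto

lemma Af_dif: "\<bar>Af r x - Af r y\<bar> \<le> 4 * (\<bar>x\<bar> + \<bar>y\<bar>) * \<bar>x - y\<bar>"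
proof (rule mvtT[OF Af_dx[OF r0 r1]])
  fix z assume "\<bar>z\<bar> \<le> \<bar>x\<bar> + \<bar>y\<bar>"
  hence "4 * \<bar>z\<bar> \<le> 4 * (\<bar>x\<bar> + \<bar>y\<bar>)" by simp
  with Ax_bd[OF r0 r1, of z] show "\<bar>Ax r z\<bar> \<le> 4 * (\<bar>x\<bar> + \<bar>y\<bar>)" by (rule order_trans)
qed

lemma Bf_dif: "\<bar>Bf r x - Bf r y\<bar> \<le> 8 * (\<bar>x\<bar> + \<bar>y\<bar>)^2 * \<bar>x - y\<bar>"
proof (rule mvtT[OF Bf_dx[OF r0 r1]])
  fix z assume "\<bar>z\<bar> \<le> \<bar>x\<bar> + \<bar>y\<bar>"
  hence "\<bar>z\<bar>^2 \<le> (\<bar>x\<bar> + \<bar>y\<bar>)^2" by (intro power_mono) auto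
  thus "\<bar>Bx r z\<bar> \<le> 8 * (\<bar>x\<bar> + \<bar>y\<bar>)^2" using Bx_bd[OF r0 r1, of z] by linarith
qed

lemma Ax_dif: "\<bar>Ax r x - Ax r y\<bar> \<le> 4 * \<bar>x - y\<bar>"
  by (rule mvtT[OF Ax_dx[OF r0 r1]]) (simp add: abs_mult)

lemma Bx_dif: "\<bar>Bx r x - Bx r y\<bar> \<le> 8 * (\<bar>x\<bar> + \<bar>y\<bar>) * \<bar>x - y\<bar>"
proof (rule mvtT[OF Bx_dx[OF r0 r1]])
  fix z assume z: "\<bar>z\<bar> \<le> \<bar>x\<bar> + \<bar>y\<bar>"
  have "\<bar>sin (2*r*z) / r^1\<bar> \<le> 1 * 2^1 * \<bar>z\<bar>^1"
    using scale_bd[OF r0, of "sin (2*r*z)" 1 z 1] tI1[of "2*r*z"] by simp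
  hence "\<bar>-4 * sin (2*r*z) / r\<bar> \<le> 8 * \<bar>z\<bar>" by (simp add: abs_divide abs_mult)
  also have "8 * \<bar>z\<bar> \<le> 8 * (\<bar>x\<bar> + \<bar>y\<bar>)" using z by simp
  finally show "\<bar>-4 * sin (2*r*z) / r\<bar> \<le> 8 * (\<bar>x\<bar> + \<bar>y\<bar>)" .
qed

lemma Ar_dif: "\<bar>Ar r x - Ar r y\<bar> \<le> 16 * (\<bar>x\<bar> + \<bar>y\<bar>)^3 * \<bar>x - y\<bar>"
proof (rule mvtT[OF Ar_dx[OF r0 r1]])
  fix z assume z: "\<bar>z\<bar> \<le> \<bar>x\<bar> + \<bar>y\<bar>"
  define F where "F = 2*r*z * cos (2*r*z) - sin (2*r*z)"
  have b: "\<bar>2*r*z\<bar> \<le> 2 * \<bar>z\<bar>" using r0 r1 mult_left_le_one_le[of "\<bar>z\<bar>" r] by (simp add: abs_mult)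
  have "\<bar>F\<bar> \<le> \<bar>2*r*z\<bar>^3" unfolding F_def by (rule tI4)
  also have "\<dots> = \<bar>2*r*z\<bar> * \<bar>2*r*z\<bar>^2" by (simp add: power3_eq_cube power2_eq_square)
  also have "\<dots> \<le> (2 * \<bar>z\<bar>) * \<bar>2*r*z\<bar>^2" by (rule mult_right_mono[OF b]) simp
  finally have "\<bar>F / r^2\<bar> \<le> (2 * \<bar>z\<bar>) * 2^2 * \<bar>z\<bar>^2" by (rule scale_bd[OF r0])
  hence "\<bar>-2 * F / r^2\<bar> \<le> 16 * \<bar>z\<bar>^3" by (simp add: abs_divide abs_mult power2_eq_square power3_eq_cube)
  moreover have "\<bar>z\<bar>^3 \<le> (\<bar>x\<bar> + \<bar>y\<bar>)^3" using z by (intro power_mono) auto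
  ultimately show "\<bar>-2 * (2*r*z * cos (2*r*z) - sin (2*r*z)) / r^2\<bar> \<le> 16 * (\<bar>x\<bar> + \<bar>y\<bar>)^3"
    unfolding F_def by linarith
qed

lemma Br_dif: "\<bar>Br r x - Br r y\<bar> \<le> 80 * (\<bar>x\<bar> + \<bar>y\<bar>)^3 * \<bar>x - y\<bar>"
proof (rule mvtT[OF Br_dx[OF r0 r1]])
  fix z assume z: "\<bar>z\<bar> \<le> \<bar>x\<bar> + \<bar>y\<bar>"
  define F where "F = 2*r*z * sin (2*r*z) + 2 * cos (2*r*z) - 2"
  have "\<bar>F / r^3\<bar> \<le> 5 * 2^3 * \<bar>z\<bar>^3" unfolding F_def by (rule scale_bd[OF r0 tI5])
  hence "\<bar>-2 * F / r^3\<bar> \<le> 80 * \<bar>z\<bar>^3" by (simp add: abs_divide abs_mult)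
  moreover have "\<bar>z\<bar>^3 \<le> (\<bar>x\<bar> + \<bar>y\<bar>)^3" using z by (intro power_mono) auto
  ultimately show "\<bar>-2 * (2*r*z * sin (2*r*z) + 2 * cos (2*r*z) - 2) / r^3\<bar> \<le> 80 * (\<bar>x\<bar> + \<bar>y\<bar>)^3"
    unfolding F_def by linarith
qed

end


lemma sum_bd2: "\<bar>a1\<bar> \<le> b1 \<Longrightarrow> \<bar>a2\<bar> \<le> b2 \<Longrightarrow> \<bar>a1+a2\<bar> \<le> b1+(b2::real)"
  by arith
lemma sum_bd6: "\<bar>a1\<bar> \<le> b1 \<Longrightarrow> \<bar>a2\<bar> \<le> b2 \<Longrightarrow> \<bar>a3\<bar> \<le> b3 \<Longrightarrow> \<bar>a4\<bar> \<le> b4 \<Longrightarrow>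
   \<bar>a5\<bar> \<le> b5 \<Longrightarrow> \<bar>a6\<bar> \<le> b6 \<Longrightarrow> \<bar>a1+a2+a3+a4+a5+a6\<bar> \<le> b1+b2+b3+b4+b5+(b6::real)"
  by (rule order_trans[OF abs_triangle_ineq], rule add_mono)+ auto

definition "gfx r x = -3/2*(PP r * Af r x + QQ r * Bf r x)"

lemma gf_gfx: "gf u r = gfx r (u r)" unfolding gf_def gfx_def ..

definition "M1 x dx = x^2 + \<bar>x\<bar>^3 + x^4 + \<bar>x\<bar>*\<bar>dx\<bar> + x^2*\<bar>dx\<bar>"

definition "M2 x y dx dy = \<bar>x-y\<bar>*\<bar>x\<bar> + \<bar>x-y\<bar>*\<bar>y\<bar> + \<bar>x-y\<bar>*x^2 + \<bar>x-y\<bar>*y^2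
   + \<bar>x-y\<bar>*\<bar>x\<bar>^3 + \<bar>x-y\<bar>*\<bar>y\<bar>^3 + \<bar>x-y\<bar>*\<bar>dx\<bar> + \<bar>x-y\<bar>*\<bar>dx\<bar>*\<bar>x\<bar> + \<bar>x-y\<bar>*\<bar>dx\<bar>*\<bar>y\<bar>
   + \<bar>y\<bar>*\<bar>dx-dy\<bar> + y^2*\<bar>dx-dy\<bar>"

lemma M1_nonneg: "0 \<le> x^2 \<and> 0 \<le> \<bar>x\<bar>^3 \<and> 0 \<le> x^4 \<and> 0 \<le> \<bar>x\<bar>*\<bar>dx\<bar> \<and> 0 \<le> x^2*\<bar>dx\<bar>" for x dx :: real
  by (auto simp: zero_le_even_power)

lemma M2_nonneg: "0 \<le> \<bar>x-y\<bar>*\<bar>x\<bar> \<and> 0 \<le> \<bar>x-y\<bar>*\<bar>y\<bar> \<and> 0 \<le> \<bar>x-y\<bar>*x^2 \<and> 0 \<le> \<bar>x-y\<bar>*y^2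
   \<and> 0 \<le> \<bar>x-y\<bar>*\<bar>x\<bar>^3 \<and> 0 \<le> \<bar>x-y\<bar>*\<bar>y\<bar>^3 \<and> 0 \<le> \<bar>x-y\<bar>*\<bar>dx\<bar> \<and> 0 \<le> \<bar>x-y\<bar>*\<bar>dx\<bar>*\<bar>x\<bar> \<and> 0 \<le> \<bar>x-y\<bar>*\<bar>dx\<bar>*\<bar>y\<bar>
   \<and> 0 \<le> \<bar>y\<bar>*\<bar>dx-dy\<bar> \<and> 0 \<le> y^2*\<bar>dx-dy\<bar>" for x y dx dy :: real
  by auto

lemma T2w: "(\<bar>x\<bar> + \<bar>y\<bar>)^2 * \<bar>x-y\<bar> \<le> 2 * (\<bar>x-y\<bar>*x^2) + 2 * (\<bar>x-y\<bar>*y^2)" for x y :: real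
  using mult_right_mono[OF T2_le[of x y], of "\<bar>x-y\<bar>"] by (simp add: algebra_simps)

lemma T3w: "(\<bar>x\<bar> + \<bar>y\<bar>)^3 * \<bar>x-y\<bar> \<le> 4 * (\<bar>x-y\<bar>*\<bar>x\<bar>^3) + 4 * (\<bar>x-y\<bar>*\<bar>y\<bar>^3)" for x y :: real
  using mult_right_mono[OF T3_le[of x y], of "\<bar>x-y\<bar>"] by (simp add: algebra_simps)

lemma T1w: "(\<bar>x\<bar> + \<bar>y\<bar>) * \<bar>x-y\<bar> = \<bar>x-y\<bar>*\<bar>x\<bar> + \<bar>x-y\<bar>*\<bar>y\<bar>" for x y :: real
  by (simp add: algebra_simps)

lemma linG1: "g = 3/2 * sv \<Longrightarrow> sv \<le> 80*a + 160*b \<Longrightarrow> 0 \<le> a \<Longrightarrow> 0 \<le> b \<Longrightarrow> 0 \<le> c \<Longrightarrow> 0 \<le> d \<Longrightarrow> 0 \<le> e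
  \<Longrightarrow> g \<le> 240*(a+b+c+d+(e::real))" by (unfold distrib_left) linarith
lemma linG2: "g = 3/2 * sv \<Longrightarrow> sv \<le> 80*a + 960*b + 80*d + 1920*c + 160*e \<Longrightarrow> 0 \<le> a \<Longrightarrow> 0 \<le> b \<Longrightarrow> 0 \<le> c \<Longrightarrow> 0 \<le> d \<Longrightarrow> 0 \<le> e
  \<Longrightarrow> g \<le> 3000*(a+b+c+d+(e::real))" by (unfold distrib_left) linarith
lemma linG3: "g = 3/2 * sv \<Longrightarrow> sv \<le> 80*(m1+m2) + 160*q \<Longrightarrow> q \<le> 2*m3 + 2*m4 \<Longrightarrow>
  0 \<le> m1 \<Longrightarrow> 0 \<le> m2 \<Longrightarrow> 0 \<le> m3 \<Longrightarrow> 0 \<le> m4 \<Longrightarrow> 0 \<le> m5 \<Longrightarrow> 0 \<le> m6 \<Longrightarrow> 0 \<le> m7 \<Longrightarrow> 0 \<le> m8 \<Longrightarrow>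
  0 \<le> m9 \<Longrightarrow> 0 \<le> m10 \<Longrightarrow> 0 \<le> m11 \<Longrightarrow>
  g \<le> 2000*(m1+m2+m3+m4+m5+m6+m7+m8+m9+m10+(m11::real))" by (unfold distrib_left) linarith
lemma linG4: "g = 3/2 * sv \<Longrightarrow> sv \<le> 80*(m1+m2) + 1920*q3 + 80*m7 + 80*m10 + 160*q2 + 160*m8 + 160*m9 + 160*m11 \<Longrightarrow>
  q2 \<le> 2*m3 + 2*m4 \<Longrightarrow> q3 \<le> 4*m5 + 4*m6 \<Longrightarrow>
  0 \<le> m1 \<Longrightarrow> 0 \<le> m2 \<Longrightarrow> 0 \<le> m3 \<Longrightarrow> 0 \<le> m4 \<Longrightarrow> 0 \<le> m5 \<Longrightarrow> 0 \<le> m6 \<Longrightarrow> 0 \<le> m7 \<Longrightarrow> 0 \<le> m8 \<Longrightarrow>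
  0 \<le> m9 \<Longrightarrow> 0 \<le> m10 \<Longrightarrow> 0 \<le> m11 \<Longrightarrow>
  g \<le> 20000*(m1+m2+m3+m4+m5+m6+m7+m8+m9+m10+(m11::real))" by (unfold distrib_left) linarith

context fixes r :: real assumes r0: "0 < r" and r1: "r \<le> 1"
begin

lemma PQb: "\<bar>PP r\<bar> \<le> 20" "\<bar>QQ r\<bar> \<le> 20" "\<bar>PP' r\<bar> \<le> 20" "\<bar>QQ' r\<bar> \<le> 20"
  using PQ_bounds[of r] r0 r1 by auto

lemma G1: "\<bar>gfx r x\<bar> \<le> 240 * M1 x dx"
proof -
  have "\<bar>PP r * Af r x + QQ r * Bf r x\<bar> \<le> 20 * (4*\<bar>x\<bar>^2) + 20 * (8*\<bar>x\<bar>^3)"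
    by (intro sum_bd2 abs_mult_le PQb Af_bd[OF r0 r1] Bf_bd[OF r0 r1])
  hence b: "\<bar>PP r * Af r x + QQ r * Bf r x\<bar> \<le> 80*x^2 + 160*\<bar>x\<bar>^3" by simp
  have e: "\<bar>gfx r x\<bar> = 3/2 * \<bar>PP r * Af r x + QQ r * Bf r x\<bar>" unfolding gfx_def abs_mult by simp
  show ?thesis unfolding M1_def by (rule linG1[OF e b]) (use M1_nonneg[of x dx] in auto)
qed

lemma G2: "\<bar>gd r x dx\<bar> \<le> 3000 * M1 x dx"
proof -
  define S where "S = PP' r*Af r x + PP r*Ar r x + PP r*(Ax r x*dx) + QQ' r*Bf r x + QQ r*Br r x + QQ r*(Bx r x*dx)"
  have e: "\<bar>gd r x dx\<bar> = 3/2 * \<bar>S\<bar>"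
  proof -
    have "gd r x dx = -3/2 * S" unfolding gd_def S_def by (simp add: algebra_simps)
    thus ?thesis by (simp add: abs_mult)
  qed
  have "\<bar>S\<bar> \<le> 20*(4*\<bar>x\<bar>^2) + 20*(40*\<bar>x\<bar>^3) + 20*((4*\<bar>x\<bar>)*\<bar>dx\<bar>) + 20*(8*\<bar>x\<bar>^3) + 20*(96*\<bar>x\<bar>^4) + 20*((8*\<bar>x\<bar>^2)*\<bar>dx\<bar>)"
    unfolding S_def
    by (intro sum_bd6 abs_mult_le PQb Af_bd[OF r0 r1] Bf_bd[OF r0 r1] Ar_bd[OF r0 r1] Br_bd[OF r0 r1]
        Ax_bd[OF r0 r1] Bx_bd[OF r0 r1] order_refl)
  hence "\<bar>S\<bar> \<le> 80*x^2 + 960*\<bar>x\<bar>^3 + 80*(\<bar>x\<bar>*\<bar>dx\<bar>) + 1920*x^4 + 160*(x^2*\<bar>dx\<bar>)"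
    by (simp add: algebra_simps)
  thus ?thesis unfolding M1_def by (rule linG2[OF e]) (use M1_nonneg[of x dx] in auto)
qed

lemma G3: "\<bar>gfx r x - gfx r y\<bar> \<le> 2000 * M2 x y dx dy"
proof -
  define S where "S = PP r * (Af r x - Af r y) + QQ r * (Bf r x - Bf r y)"
  have e: "\<bar>gfx r x - gfx r y\<bar> = 3/2 * \<bar>S\<bar>"
  proof -
    have "gfx r x - gfx r y = -3/2 * S" unfolding gfx_def S_def by (simp add: algebra_simps)
    thus ?thesis by (simp add: abs_mult)
  qed
  have "\<bar>S\<bar> \<le> 20 * (4 * (\<bar>x\<bar> + \<bar>y\<bar>) * \<bar>x - y\<bar>) + 20 * (8 * (\<bar>x\<bar> + \<bar>y\<bar>)^2 * \<bar>x - y\<bar>)"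
    unfolding S_def by (intro sum_bd2 abs_mult_le PQb Af_dif[OF r0 r1] Bf_dif[OF r0 r1])
  hence "\<bar>S\<bar> \<le> 80 * ((\<bar>x\<bar> + \<bar>y\<bar>) * \<bar>x - y\<bar>) + 160 * ((\<bar>x\<bar> + \<bar>y\<bar>)^2 * \<bar>x - y\<bar>)"
    by (simp add: algebra_simps)
  thus ?thesis unfolding M2_def T1w by (rule linG3[OF e _ T2w[of x y]]) (use M2_nonneg[of x y dx dy] in auto)
qed

lemma G4: "\<bar>gd r x dx - gd r y dy\<bar> \<le> 20000 * M2 x y dx dy"
proof -
  define S where "S = PP' r*(Af r x - Af r y) + PP r*(Ar r x - Ar r y)
      + PP r*((Ax r x - Ax r y)*dx + Ax r y * (dx - dy)) + QQ' r*(Bf r x - Bf r y) + QQ r*(Br r x - Br r y)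
      + QQ r*((Bx r x - Bx r y)*dx + Bx r y*(dx - dy))"
  have e: "\<bar>gd r x dx - gd r y dy\<bar> = 3/2 * \<bar>S\<bar>"
  proof -
    have "gd r x dx - gd r y dy = -3/2 * S" unfolding gd_def S_def by (simp add: algebra_simps)
    thus ?thesis by (simp add: abs_mult)
  qed
  have a: "\<bar>(Ax r x - Ax r y)*dx + Ax r y * (dx - dy)\<bar> \<le> (4 * \<bar>x - y\<bar>)*\<bar>dx\<bar> + (4*\<bar>y\<bar>)*\<bar>dx-dy\<bar>"
    by (intro sum_bd2 abs_mult_le Ax_dif[OF r0 r1] Ax_bd[OF r0 r1] order_refl)
  have b: "\<bar>(Bx r x - Bx r y)*dx + Bx r y * (dx - dy)\<bar> \<le> (8 * (\<bar>x\<bar> + \<bar>y\<bar>) * \<bar>x - y\<bar>)*\<bar>dx\<bar> + (8*\<bar>y\<bar>^2)*\<bar>dx-dy\<bar>"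
    by (intro sum_bd2 abs_mult_le Bx_dif[OF r0 r1] Bx_bd[OF r0 r1] order_refl)
  have "\<bar>S\<bar> \<le> 20 * (4 * (\<bar>x\<bar> + \<bar>y\<bar>) * \<bar>x - y\<bar>) + 20 * (16 * (\<bar>x\<bar> + \<bar>y\<bar>)^3 * \<bar>x - y\<bar>)
      + 20 * ((4 * \<bar>x - y\<bar>)*\<bar>dx\<bar> + (4*\<bar>y\<bar>)*\<bar>dx-dy\<bar>) + 20 * (8 * (\<bar>x\<bar> + \<bar>y\<bar>)^2 * \<bar>x - y\<bar>)
      + 20 * (80 * (\<bar>x\<bar> + \<bar>y\<bar>)^3 * \<bar>x - y\<bar>)
      + 20 * ((8 * (\<bar>x\<bar> + \<bar>y\<bar>) * \<bar>x - y\<bar>)*\<bar>dx\<bar> + (8*\<bar>y\<bar>^2)*\<bar>dx-dy\<bar>)"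
    unfolding S_def
    by (intro sum_bd6 abs_mult_le PQb Af_dif[OF r0 r1] Bf_dif[OF r0 r1] Ar_dif[OF r0 r1] Br_dif[OF r0 r1] a b)
  also have "\<dots> = 80 * ((\<bar>x\<bar> + \<bar>y\<bar>) * \<bar>x - y\<bar>) + 1920 * ((\<bar>x\<bar> + \<bar>y\<bar>)^3 * \<bar>x - y\<bar>)
      + 80 * (\<bar>x-y\<bar>*\<bar>dx\<bar>) + 80 * (\<bar>y\<bar>*\<bar>dx-dy\<bar>) + 160 * ((\<bar>x\<bar> + \<bar>y\<bar>)^2 * \<bar>x - y\<bar>)
      + 160 * (\<bar>x-y\<bar>*\<bar>dx\<bar>*\<bar>x\<bar>) + 160 * (\<bar>x-y\<bar>*\<bar>dx\<bar>*\<bar>y\<bar>) + 160 * (y^2*\<bar>dx-dy\<bar>)"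
    by (simp add: algebra_simps)
  finally have "\<bar>S\<bar> \<le> \<dots>" .
  thus ?thesis unfolding M2_def T1w by (rule linG4[OF e _ T2w[of x y] T3w[of x y]]) (use M2_nonneg[of x y dx dy] in auto)
qed

end


lemma holder:
  fixes f g :: "'a \<Rightarrow> real" and p q :: real
  assumes pq: "p > 1" "q > 1" "1/p + 1/q = 1"
    and fi: "integrable M (\<lambda>x. \<bar>f x\<bar> powr p)" and gi: "integrable M (\<lambda>x. \<bar>g x\<bar> powr q)"
    and fgi: "integrable M (\<lambda>x. f x * g x)"
  shows "integral\<^sup>L M (\<lambda>x. \<bar>f x * g x\<bar>) \<le>
     (integral\<^sup>L M (\<lambda>x. \<bar>f x\<bar> powr p)) powr (1/p) * (integral\<^sup>L M (\<lambda>x. \<bar>g x\<bar> powr q)) powr (1/q)"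
proof -
  define A where "A = integral\<^sup>L M (\<lambda>x. \<bar>f x\<bar> powr p)"
  define B where "B = integral\<^sup>L M (\<lambda>x. \<bar>g x\<bar> powr q)"
  have A0: "A \<ge> 0" unfolding A_def by (rule integral_nonneg_AE) auto
  have B0: "B \<ge> 0" unfolding B_def by (rule integral_nonneg_AE) auto
  have key: "integral\<^sup>L M (\<lambda>x. \<bar>f x * g x\<bar>) \<le> (A+e) powr (1/p) * (B+e) powr (1/q)" if e: "e > 0" for e
  proof -
    define \<alpha> where "\<alpha> = (A+e) powr (1/p)"
    define \<beta> where "\<beta> = (B+e) powr (1/q)"
    have Ae: "A + e > 0" "B + e > 0" using A0 B0 e by auto
    have ab: "\<alpha> > 0" "\<beta> > 0" unfolding \<alpha>_def \<beta>_def using Ae by auto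
    have ap: "\<alpha> powr p = A + e" unfolding \<alpha>_def using Ae pq by (simp add: powr_powr)
    have bq: "\<beta> powr q = B + e" unfolding \<beta>_def using Ae pq by (simp add: powr_powr)
    have pw: "\<bar>f x * g x\<bar> / (\<alpha> * \<beta>) \<le> \<bar>f x\<bar> powr p / (p * (A+e)) + \<bar>g x\<bar> powr q / (q * (B+e))" for x
    proof -
      have "(\<bar>f x\<bar>/\<alpha>) * (\<bar>g x\<bar>/\<beta>) \<le> (\<bar>f x\<bar>/\<alpha>) powr p / p + (\<bar>g x\<bar>/\<beta>) powr q / q"
        by (rule Youngs_inequality) (use pq ab in auto)
      also have "(\<bar>f x\<bar>/\<alpha>) powr p = \<bar>f x\<bar> powr p / (A + e)"
        using ab by (simp add: powr_divide ap)
      also have "(\<bar>g x\<bar>/\<beta>) powr q = \<bar>g x\<bar> powr q / (B + e)"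
        using ab by (simp add: powr_divide bq)
      finally show ?thesis by (simp add: abs_mult mult.commute)
    qed
    have i1: "integrable M (\<lambda>x. \<bar>f x * g x\<bar> / (\<alpha> * \<beta>))" using fgi by auto
    have i2: "integrable M (\<lambda>x. \<bar>f x\<bar> powr p / (p * (A+e)) + \<bar>g x\<bar> powr q / (q * (B+e)))"
      using fi gi by auto
    have "integral\<^sup>L M (\<lambda>x. \<bar>f x * g x\<bar> / (\<alpha> * \<beta>)) \<le>
        integral\<^sup>L M (\<lambda>x. \<bar>f x\<bar> powr p / (p * (A+e)) + \<bar>g x\<bar> powr q / (q * (B+e)))"
      by (rule integral_mono[OF i1 i2 pw])
    also have "\<dots> = A / (p * (A+e)) + B / (q * (B+e))"
      using fi gi unfolding A_def B_def by simp
    also have "\<dots> \<le> 1/p + 1/q"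
    proof -
      have r: "X / (s * (X+e)) \<le> 1/s" if "X \<ge> 0" "s > 0" for X s
      proof -
        have "X/(X+e) \<le> 1" using that e by simp
        hence "X/(X+e) * (1/s) \<le> 1 * (1/s)" by (rule mult_right_mono) (use that in simp)
        thus ?thesis by (simp add: mult.commute)
      qed
      have "A / (p * (A+e)) \<le> 1/p" using r[of A p] A0 pq by simp
      moreover have "B / (q * (B+e)) \<le> 1/q" using r[of B q] B0 pq by simp
      ultimately show ?thesis by linarith
    qed
    finally have "integral\<^sup>L M (\<lambda>x. \<bar>f x * g x\<bar>) / (\<alpha> * \<beta>) \<le> 1" using pq by simp
    hence "integral\<^sup>L M (\<lambda>x. \<bar>f x * g x\<bar>) \<le> \<alpha> * \<beta>" using ab by (simp add: pos_divide_le_eq)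
    thus ?thesis unfolding \<alpha>_def \<beta>_def .
  qed
  have lim: "((\<lambda>e. (A+e) powr (1/p) * (B+e) powr (1/q)) \<longlongrightarrow> (A+0) powr (1/p) * (B+0) powr (1/q)) (at_right 0)"
    using pq A0 B0
    by (intro tendsto_intros tendsto_powr') (auto intro!: eventually_at_rightI[of 0 1])
  have "integral\<^sup>L M (\<lambda>x. \<bar>f x * g x\<bar>) \<le> (A+0) powr (1/p) * (B+0) powr (1/q)"
    by (rule tendsto_lowerbound[OF lim]) (auto intro!: key eventually_at_rightI[of 0 1])
  thus ?thesis unfolding A_def B_def by simp
qed


lemma cont_bounded_cball:
  fixes F :: "real^6 \<Rightarrow> real"
  assumes "continuous_on (cball 0 1) F"
  shows "\<exists>C. \<forall>x\<in>cball 0 1. \<bar>F x\<bar> \<le> C"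
proof -
  have "bounded (F ` cball 0 1)"
    by (rule compact_imp_bounded, rule compact_continuous_image[OF assms]) simp
  then obtain C where "\<forall>y\<in>F ` cball 0 1. norm y \<le> C" unfolding bounded_iff by blast
  thus ?thesis by auto
qed

lemma smooth_props:
  assumes sm: "smooth_radial U"
  shows "\<And>r. 0 < r \<Longrightarrow> r < 1 \<Longrightarrow> (U has_real_derivative deriv U r) (at r)"
    and "continuous_on (ball 0 1) (\<lambda>x::real^6. U (norm x))"
    and "\<exists>C. \<forall>x\<in>ball (0::real^6) 1. \<bar>U (norm x)\<bar> \<le> C"
    and "\<exists>DF. continuous_on (ball (0::real^6) 1) DF \<and> (\<forall>x\<in>ball 0 1. x \<noteq> 0 \<longrightarrow> deriv U (norm x) = DF x)
           \<and> (\<exists>C. \<forall>x\<in>ball 0 1. \<bar>DF x\<bar> \<le> C)"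
proof -
  define f where "f = (\<lambda>x::real^6. U (norm x))"
  obtain S where S: "cball 0 1 \<subseteq> S" "smooth_on S f"
    using sm unfolding smooth_radial_def f_def by blast
  have cont: "\<And>es. continuous_on S (Dirs es f)"
    and dif: "\<And>es e x. x \<in> S \<Longrightarrow> (\<lambda>t. Dirs es f (x + t *\<^sub>R e)) differentiable (at 0)"
    using S(2) unfolding smooth_on_def by auto
  define e1 :: "real^6" where "e1 = axis 1 1"
  have ne1: "norm e1 = 1" unfolding e1_def by simp
  have key: "(U has_real_derivative Dirs [e1] f (r *\<^sub>R e1)) (at r)" if r: "0 < r" "r < 1" for r
  proof -
    have xin: "r *\<^sub>R e1 \<in> S" using S(1) r ne1 by (auto simp: dist_norm)
    define D where "D = Dirs [e1] f (r *\<^sub>R e1)"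
    have D: "D = deriv (\<lambda>t. f (r *\<^sub>R e1 + t *\<^sub>R e1)) 0" unfolding D_def by simp
    have "(\<lambda>t. Dirs [] f (r *\<^sub>R e1 + t *\<^sub>R e1)) differentiable (at 0)" by (rule dif[OF xin])
    hence d1: "((\<lambda>t. f (r *\<^sub>R e1 + t *\<^sub>R e1)) has_real_derivative D) (at 0)"
      unfolding D by (simp add: DERIV_deriv_iff_real_differentiable)
    have ev: "eventually (\<lambda>t. f (r *\<^sub>R e1 + t *\<^sub>R e1) = U (t + r)) (nhds 0)"
    proof -
      have "eventually (\<lambda>t. t \<in> ball 0 r) (nhds (0::real))" using r by (intro eventually_nhds_in_open) auto
      thus ?thesis
      proof eventually_elim
        case (elim t)
        hence "\<bar>t\<bar> < r" by simp
        hence "norm (r *\<^sub>R e1 + t *\<^sub>R e1) = t + r"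
          using ne1 by (simp add: scaleR_add_left[symmetric] del: scaleR_add_left)
        thus ?case unfolding f_def by simp
      qed
    qed
    have "((\<lambda>t. U (t + r)) has_real_derivative D) (at 0)"
      using d1 DERIV_cong_ev[OF refl ev refl] by simp
    hence "(U has_real_derivative D) (at (0 + r))" by (subst DERIV_shift) 
    thus ?thesis unfolding D_def by simp
  qed
  show "(U has_real_derivative deriv U r) (at r)" if "0 < r" "r < 1" for r
    using key[OF that] DERIV_imp_deriv by metis
  have cf: "continuous_on (cball 0 1) f" using cont[of "[]"] S(1) continuous_on_subset by auto
  show "continuous_on (ball 0 1) (\<lambda>x::real^6. U (norm x))"
    using continuous_on_subset[OF cf] unfolding f_def by auto
  show "\<exists>C. \<forall>x\<in>ball (0::real^6) 1. \<bar>U (norm x)\<bar> \<le> C"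
    using cont_bounded_cball[OF cf] unfolding f_def by fastforce
  define DF where "DF = (\<lambda>x::real^6. Dirs [e1] f (norm x *\<^sub>R e1))"
  have cDF: "continuous_on (cball 0 1) DF"
  proof -
    have c1: "continuous_on (cball 0 1) (\<lambda>x::real^6. norm x *\<^sub>R e1)" by (intro continuous_intros)
    have c2: "(\<lambda>x::real^6. norm x *\<^sub>R e1) ` cball 0 1 \<subseteq> S" using S(1) ne1 by auto
    show ?thesis unfolding DF_def using continuous_on_compose2[OF cont[of "[e1]"] c1 c2] .
  qed
  show "\<exists>DF. continuous_on (ball (0::real^6) 1) DF \<and> (\<forall>x\<in>ball 0 1. x \<noteq> 0 \<longrightarrow> deriv U (norm x) = DF x)
           \<and> (\<exists>C. \<forall>x\<in>ball 0 1. \<bar>DF x\<bar> \<le> C)"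
  proof (intro exI[of _ DF] conjI)
    show "continuous_on (ball 0 1) DF" using continuous_on_subset[OF cDF] by auto
  next
    show "\<forall>x\<in>ball 0 1. x \<noteq> 0 \<longrightarrow> deriv U (norm x) = DF x"
    proof (intro ballI impI)
      fix x :: "real^6" assume "x \<in> ball 0 1" "x \<noteq> 0"
      hence "0 < norm x" "norm x < 1" by auto
      thus "deriv U (norm x) = DF x" unfolding DF_def using key DERIV_imp_deriv by metis
    qed
  next
    show "\<exists>C. \<forall>x\<in>ball 0 1. \<bar>DF x\<bar> \<le> C" using cont_bounded_cball[OF cDF] by fastforce
  qed
qed


definition MB :: "(real^6) measure" where "MB = restrict_space lborel (ball 0 1)"

lemma ball_sets: "ball (0::real^6) 1 \<inter> space lborel \<in> sets lborel" by simp

lemma space_MB: "space MB = ball 0 1" unfolding MB_def by (simp add: space_restrict_space)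

lemma fin_MB: "finite_measure MB"
proof
  have "emeasure MB (space MB) = emeasure lborel (ball (0::real^6) 1)"
    unfolding MB_def by (subst emeasure_restrict_space) (auto simp: space_restrict_space)
  also have "\<dots> < \<infinity>" by (rule emeasure_bounded_finite) simp
  finally show "emeasure MB (space MB) \<noteq> \<infinity>" by simp
qed

definition good :: "(real \<Rightarrow> real) \<Rightarrow> bool" where
  "good \<phi> \<longleftrightarrow> (\<lambda>x. \<phi> (norm x)) \<in> borel_measurable MB \<and> (\<exists>C. \<forall>x\<in>ball (0::real^6) 1. \<bar>\<phi> (norm x)\<bar> \<le> C)"

lemma good_int: "good \<phi> \<Longrightarrow> integrable MB (\<lambda>x. \<phi> (norm x))"
proof -
  assume "good \<phi>"
  then obtain C where m: "(\<lambda>x. \<phi> (norm x)) \<in> borel_measurable MB" and C: "\<forall>x\<in>ball (0::real^6) 1. \<bar>\<phi> (norm x)\<bar> \<le> C"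
    unfolding good_def by blast
  show ?thesis
    by (rule finite_measure.integrable_const_bound[OF fin_MB, where B=C]) (use C m in \<open>auto simp: space_MB intro!: AE_I2\<close>)
qed

lemma good_const: "good (\<lambda>r. c)"
  unfolding good_def by (intro conjI exI[of _ "\<bar>c\<bar>"] ballI order_refl borel_measurable_const)

lemma good_bound_nonneg: "\<forall>x\<in>ball (0::real^6) 1. \<bar>\<phi> (norm x)\<bar> \<le> C \<Longrightarrow> 0 \<le> (C::real)"
proof -
  assume a: "\<forall>x\<in>ball (0::real^6) 1. \<bar>\<phi> (norm x)\<bar> \<le> C"
  have "(0::real^6) \<in> ball 0 1" by simp
  hence "\<bar>\<phi> (norm (0::real^6))\<bar> \<le> C" using a by blast
  thus ?thesis using abs_ge_zero[of "\<phi> (norm (0::real^6))"] by linarith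
qed

lemma good_add: "good f \<Longrightarrow> good g \<Longrightarrow> good (\<lambda>r. f r + g r)"
  unfolding good_def
proof (elim conjE exE, intro conjI)
  fix C D assume "\<forall>x\<in>ball (0::real^6) 1. \<bar>f (norm x)\<bar> \<le> C" "\<forall>x\<in>ball (0::real^6) 1. \<bar>g (norm x)\<bar> \<le> D"
  thus "\<exists>C. \<forall>x\<in>ball (0::real^6) 1. \<bar>f (norm x) + g (norm x)\<bar> \<le> C"
    by (intro exI[of _ "C + D"]) (auto intro: abs_triangle_ineq[THEN order_trans] add_mono)
qed (measurable)

lemma good_diff: "good f \<Longrightarrow> good g \<Longrightarrow> good (\<lambda>r. f r - g r)"
  unfolding good_def
proof (elim conjE exE, intro conjI)
  fix C D assume "\<forall>x\<in>ball (0::real^6) 1. \<bar>f (norm x)\<bar> \<le> C" "\<forall>x\<in>ball (0::real^6) 1. \<bar>g (norm x)\<bar> \<le> D"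
  thus "\<exists>C. \<forall>x\<in>ball (0::real^6) 1. \<bar>f (norm x) - g (norm x)\<bar> \<le> C"
    by (intro exI[of _ "C + D"]) (auto intro: abs_triangle_ineq4[THEN order_trans] add_mono)
qed (measurable)

lemma good_mult: "good f \<Longrightarrow> good g \<Longrightarrow> good (\<lambda>r. f r * g r)"
  unfolding good_def
proof (elim conjE exE, intro conjI)
  fix C D assume "\<forall>x\<in>ball (0::real^6) 1. \<bar>f (norm x)\<bar> \<le> C" "\<forall>x\<in>ball (0::real^6) 1. \<bar>g (norm x)\<bar> \<le> D"
  thus "\<exists>C. \<forall>x\<in>ball (0::real^6) 1. \<bar>f (norm x) * g (norm x)\<bar> \<le> C"
    by (intro exI[of _ "C * D"]) (auto simp: abs_mult intro!: mult_mono)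
qed (measurable)

lemma good_abs: "good f \<Longrightarrow> good (\<lambda>r. \<bar>f r\<bar>)"
  unfolding good_def by (elim conjE exE) (auto intro: exI)

lemma good_powr: "good f \<Longrightarrow> 0 \<le> p \<Longrightarrow> good (\<lambda>r. \<bar>f r\<bar> powr p)"
  unfolding good_def
proof (elim conjE exE, intro conjI)
  fix C assume C: "\<forall>x\<in>ball (0::real^6) 1. \<bar>f (norm x)\<bar> \<le> C" and p: "0 \<le> p"
  show "\<exists>C. \<forall>x\<in>ball (0::real^6) 1. \<bar>\<bar>f (norm x)\<bar> powr p\<bar> \<le> C"
    using C p by (intro exI[of _ "C powr p"]) (auto intro!: powr_mono2)
qed (measurable)

lemma good_power: "good f \<Longrightarrow> good (\<lambda>r. f r ^ n)"
  by (induction n) (auto intro: good_mult good_const)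

lemma Lp_MB: "Lp p f = (integral\<^sup>L MB (\<lambda>x. \<bar>f (norm x)\<bar> powr p)) powr (1/p)"
  unfolding Lp_def set_lebesgue_integral_def MB_def
  by (subst integral_restrict_space[OF ball_sets]) simp

lemma H1sq_MB: "H1sq g = integral\<^sup>L MB (\<lambda>x. (g (norm x))^2 + (deriv g (norm x))^2)"
  unfolding H1sq_def set_lebesgue_integral_def MB_def
  by (subst integral_restrict_space[OF ball_sets]) simp

lemma Lp_nonneg: "0 \<le> Lp p f" unfolding Lp_def by simp

lemma Lp_abs: "Lp p (\<lambda>r. \<bar>f r\<bar>) = Lp p f" unfolding Lp_def by simp

lemma Lp_one: "Lp 1 f = integral\<^sup>L MB (\<lambda>x. \<bar>f (norm x)\<bar>)"
proof -
  have "0 \<le> integral\<^sup>L MB (\<lambda>x. \<bar>f (norm x)\<bar>)" by (rule integral_nonneg_AE) auto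
  thus ?thesis unfolding Lp_MB by simp
qed

lemma Lp_pow:
  assumes p: "0 < p" and n: "1 \<le> n"
  shows "Lp p (\<lambda>r. f r ^ n) = Lp (real n * p) f ^ n"
proof -
  have e: "\<bar>f r ^ n\<bar> powr p = \<bar>f r\<bar> powr (real n * p)" for r
  proof (cases "f r = 0")
    case True thus ?thesis using n p by simp
  next
    case False
    hence "\<bar>f r ^ n\<bar> = \<bar>f r\<bar> powr real n" by (simp add: power_abs powr_realpow)
    thus ?thesis by (simp add: powr_powr)
  qed
  define I where "I = integral\<^sup>L MB (\<lambda>x. \<bar>f (norm x)\<bar> powr (real n * p))"
  have I0: "0 \<le> I" unfolding I_def by (rule integral_nonneg_AE) auto
  have "Lp p (\<lambda>r. f r ^ n) = I powr (1/p)" unfolding Lp_MB e I_def ..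
  also have "\<dots> = (I powr (1 / (real n * p))) powr real n"
    using n p by (simp add: powr_powr)
  also have "\<dots> = (I powr (1 / (real n * p))) ^ n"
    using n I0 by (intro powr_realpow') auto
  also have "\<dots> = Lp (real n * p) f ^ n" unfolding Lp_MB I_def ..
  finally show ?thesis .
qed

lemma Lp_holder:
  assumes p: "0 < p" and st: "1 < s" "1 < t" "1/s + 1/t = 1" and f: "good f" and g: "good g"
  shows "Lp p (\<lambda>r. f r * g r) \<le> Lp (p * s) f * Lp (p * t) g"
proof -
  define F where "F = (\<lambda>x::real^6. \<bar>f (norm x)\<bar> powr p)"
  define G where "G = (\<lambda>x::real^6. \<bar>g (norm x)\<bar> powr p)"
  have gf: "good (\<lambda>r. \<bar>f r\<bar> powr p)" using good_powr[OF f] p by simp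
  have gg: "good (\<lambda>r. \<bar>g r\<bar> powr p)" using good_powr[OF g] p by simp
  have iF: "integrable MB (\<lambda>x. \<bar>F x\<bar> powr s)"
    unfolding F_def using good_int[OF good_powr[OF gf, of s]] st by simp
  have iG: "integrable MB (\<lambda>x. \<bar>G x\<bar> powr t)"
    unfolding G_def using good_int[OF good_powr[OF gg, of t]] st by simp
  have iFG: "integrable MB (\<lambda>x. F x * G x)"
    unfolding F_def G_def using good_int[OF good_mult[OF gf gg]] by simp
  have H: "integral\<^sup>L MB (\<lambda>x. \<bar>F x * G x\<bar>) \<le>
     (integral\<^sup>L MB (\<lambda>x. \<bar>F x\<bar> powr s)) powr (1/s) * (integral\<^sup>L MB (\<lambda>x. \<bar>G x\<bar> powr t)) powr (1/t)"
    by (rule holder[OF st iF iG iFG])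
  define A where "A = integral\<^sup>L MB (\<lambda>x. \<bar>f (norm x)\<bar> powr (p * s))"
  define B where "B = integral\<^sup>L MB (\<lambda>x. \<bar>g (norm x)\<bar> powr (p * t))"
  have Fn: "0 \<le> F x" "0 \<le> G x" for x unfolding F_def G_def by simp_all
  have eFG: "\<bar>F x * G x\<bar> = \<bar>f (norm x) * g (norm x)\<bar> powr p" for x
  proof -
    have "\<bar>F x * G x\<bar> = F x * G x" using Fn[of x] by simp
    also have "\<dots> = (\<bar>f (norm x)\<bar> * \<bar>g (norm x)\<bar>) powr p" unfolding F_def G_def by (rule powr_mult[symmetric])
    also have "\<dots> = \<bar>f (norm x) * g (norm x)\<bar> powr p" by (simp only: abs_mult)
    finally show ?thesis .
  qed
  have eF: "\<bar>F x\<bar> powr s = \<bar>f (norm x)\<bar> powr (p * s)" for x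
    using Fn[of x] unfolding F_def by (simp only: abs_of_nonneg powr_powr)
  have eG: "\<bar>G x\<bar> powr t = \<bar>g (norm x)\<bar> powr (p * t)" for x
    using Fn[of x] unfolding G_def by (simp only: abs_of_nonneg powr_powr)
  have H': "integral\<^sup>L MB (\<lambda>x. \<bar>f (norm x) * g (norm x)\<bar> powr p) \<le> A powr (1/s) * B powr (1/t)"
    using H unfolding eFG eF eG A_def B_def .
  have "Lp p (\<lambda>r. f r * g r) = (integral\<^sup>L MB (\<lambda>x. \<bar>f (norm x) * g (norm x)\<bar> powr p)) powr (1/p)"
    unfolding Lp_MB ..
  also have "\<dots> \<le> (A powr (1/s) * B powr (1/t)) powr (1/p)"
  proof (rule powr_mono2)
    show "0 \<le> 1/p" using p by simp
    show "0 \<le> integral\<^sup>L MB (\<lambda>x. \<bar>f (norm x) * g (norm x)\<bar> powr p)" by (rule integral_nonneg_AE) simp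
  qed (rule H')
  also have "\<dots> = A powr (1/(s*p)) * B powr (1/(t*p))"
    unfolding powr_mult powr_powr by simp
  also have "A powr (1/(s*p)) * B powr (1/(t*p)) = A powr (1/(p * s)) * B powr (1/(p * t))"
  proof -
    have e: "s * p = p * s" "t * p = p * t" by (simp_all add: mult.commute)
    show ?thesis by (simp only: e)
  qed
  also have "A powr (1/(p * s)) * B powr (1/(p * t)) = Lp (p * s) f * Lp (p * t) g" unfolding Lp_MB A_def B_def ..
  finally show ?thesis .
qed


lemma meas_MB: "continuous_on (ball (0::real^6) 1) F \<Longrightarrow> F \<in> borel_measurable MB"
proof -
  assume c: "continuous_on (ball (0::real^6) 1) F"
  have m: "F \<in> borel_measurable (restrict_space borel (ball (0::real^6) 1))"
    by (rule borel_measurable_continuous_on_restrict[OF c])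
  have e: "sets (restrict_space lborel (ball (0::real^6) 1)) = sets (restrict_space borel (ball 0 1))"
    by (rule sets_restrict_space_cong) simp
  show ?thesis unfolding MB_def using m measurable_cong_sets[OF e refl, of borel] by simp
qed

lemma good_U: assumes "smooth_radial U" shows "good U"
  unfolding good_def using smooth_props(2,3)[OF assms] meas_MB by blast

lemma good_dU: assumes "smooth_radial U" shows "good (deriv U)"
proof -
  obtain DF C where c: "continuous_on (ball (0::real^6) 1) DF" and e: "\<forall>x\<in>ball 0 1. x \<noteq> 0 \<longrightarrow> deriv U (norm x) = DF x"
    and C: "\<forall>x\<in>ball 0 1. \<bar>DF x\<bar> \<le> C"
    using smooth_props(4)[OF assms] by blast
  have mDF: "DF \<in> borel_measurable MB" by (rule meas_MB[OF c])
  have s0: "{0::real^6} \<inter> space MB \<in> sets MB"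
    unfolding MB_def by (rule sets_restrict_space_iff[THEN iffD2]) (auto simp: space_restrict_space)
  have m: "(\<lambda>x. if x \<in> {0} then deriv U 0 else DF x) \<in> borel_measurable MB"
    by (rule measurable_If_set[OF borel_measurable_const mDF s0])
  have "(\<lambda>x. deriv U (norm x)) \<in> borel_measurable MB"
    by (rule measurable_cong[THEN iffD2, OF _ m]) (use e in \<open>auto simp: space_MB\<close>)
  moreover have "\<forall>x\<in>ball (0::real^6) 1. \<bar>deriv U (norm x)\<bar> \<le> max C \<bar>deriv U 0\<bar>"
    using e C by (metis max.coboundedI1 max.coboundedI2 norm_zero order_refl)
  ultimately show ?thesis unfolding good_def by blast
qed


lemma sq_list: "(sum_list xs)^2 \<le> real (length xs) * sum_list (map (\<lambda>x. x^2) xs)" for xs :: "real list"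
proof (induction xs)
  case Nil thus ?case by simp
next
  case (Cons x xs)
  define n where "n = real (length xs)"
  define S where "S = sum_list xs"
  define Q where "Q = sum_list (map (\<lambda>x. x^2) xs)"
  have IH: "S^2 \<le> n * Q" using Cons unfolding n_def S_def Q_def .
  have Q0: "0 \<le> Q" unfolding Q_def by (induction xs) auto
  have key: "2*x*S \<le> n * x^2 + Q"
  proof (cases "n = 0")
    case True
    hence "xs = []" unfolding n_def by simp
    thus ?thesis using Q0 True unfolding S_def by simp
  next
    case False
    hence n0: "n > 0" unfolding n_def by simp
    have "0 \<le> (n*x - S)^2" by simp
    hence "2*x*S*n \<le> n^2 * x^2 + S^2" by (simp add: power2_eq_square algebra_simps)
    also have "\<dots> \<le> n^2 * x^2 + n * Q" using IH by simp
    finally have "(2*x*S) * n \<le> (n * x^2 + Q) * n" by (simp add: power2_eq_square algebra_simps)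
    thus ?thesis using n0 by simp
  qed
  have "(sum_list (x # xs))^2 = x^2 + 2*x*S + S^2" unfolding S_def by (simp add: power2_eq_square algebra_simps)
  also have "\<dots> \<le> (n + 1) * (x^2 + Q)" using key IH by (simp add: algebra_simps)
  also have "\<dots> = real (length (x # xs)) * sum_list (map (\<lambda>x. x^2) (x # xs))"
    unfolding n_def Q_def by simp
  finally show ?case .
qed

lemma sq5: "(a+b+c+d+e)^2 \<le> 5*(a^2+b^2+c^2+d^2+e^2)" for a b c d e :: real
  using sq_list[of "[a,b,c,d,e]"] by (simp add: add.assoc)

lemma sq11: "(a1+a2+a3+a4+a5+a6+a7+a8+a9+a10+a11)^2 \<le> 11*(a1^2+a2^2+a3^2+a4^2+a5^2+a6^2+a7^2+a8^2+a9^2+a10^2+a11^2)"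
  for a1 a2 a3 a4 a5 a6 a7 a8 a9 a10 a11 :: real
  using sq_list[of "[a1,a2,a3,a4,a5,a6,a7,a8,a9,a10,a11]"] by (simp add: add.assoc)

lemma sq2bd: "\<bar>g\<bar> \<le> K * M \<Longrightarrow> \<bar>h\<bar> \<le> K * M \<Longrightarrow> g^2 + h^2 \<le> 2 * K^2 * M^2" for g h K M :: real
proof -
  assume a: "\<bar>g\<bar> \<le> K * M" "\<bar>h\<bar> \<le> K * M"
  have "\<bar>g\<bar>^2 \<le> (K*M)^2" "\<bar>h\<bar>^2 \<le> (K*M)^2"
    using power_mono[OF a(1) abs_ge_zero, of 2] power_mono[OF a(2) abs_ge_zero, of 2] by auto
  hence "g^2 \<le> (K*M)^2" "h^2 \<le> (K*M)^2" by simp_all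
  thus ?thesis by (simp add: power_mult_distrib)
qed


definition J :: "(real \<Rightarrow> real) \<Rightarrow> real" where "J \<phi> = integral\<^sup>L MB (\<lambda>x. \<phi> (norm x))"

lemma J_add: "good f \<Longrightarrow> good g \<Longrightarrow> J (\<lambda>r. f r + g r) = J f + J g"
  unfolding J_def by (rule Bochner_Integration.integral_add[OF good_int good_int])

lemma J_Lp1: "good f \<Longrightarrow> (\<And>r. 0 \<le> f r) \<Longrightarrow> J f = Lp 1 f"
  unfolding J_def Lp_one by (simp add: abs_of_nonneg)

lemma H2sq_zero: "H2sq (\<lambda>r. 0) = 0"
proof -
  have d: "deriv (\<lambda>r::real. 0::real) = (\<lambda>r. 0)" by (intro ext DERIV_imp_deriv) (rule DERIV_const)
  show ?thesis unfolding H2sq_def d by simp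
qed

lemma AE_MB_nz: "AE x in MB. x \<in> ball 0 1 \<and> x \<noteq> 0"
proof -
  have "AE x in lborel. x \<in> ball (0::real^6) 1 \<longrightarrow> x \<noteq> 0"
    using AE_lborel_singleton[of "0::real^6"] by eventually_elim auto
  hence "AE x in MB. x \<noteq> 0" unfolding MB_def by (subst AE_restrict_space_iff[OF ball_sets])
  moreover have "AE x in MB. x \<in> ball 0 1" using AE_space[of MB] by (simp add: space_MB)
  ultimately show ?thesis by eventually_elim auto
qed

lemma g_facts:
  assumes sm: "smooth_radial (fst u)" and r: "0 < r" "r < 1"
  shows "snd (Nvec u) r = gfx r (fst u r)"
    and "deriv (snd (Nvec u)) r = gd r (fst u r) (deriv (fst u) r)"
proof -
  show "snd (Nvec u) r = gfx r (fst u r)" using Nvec_eq[of r u] r by (simp add: gf_gfx)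
  have d: "(gf (fst u) has_real_derivative gd r (fst u r) (deriv (fst u) r)) (at r)"
    by (rule gf_deriv) (use r smooth_props(1)[OF sm] in auto)
  have "eventually (\<lambda>s. s \<in> {0<..}) (nhds r)" using r by (intro eventually_nhds_in_open) auto
  hence ev: "eventually (\<lambda>s. snd (Nvec u) s = gf (fst u) s) (nhds r)"
    by eventually_elim (simp add: Nvec_eq)
  have "(snd (Nvec u) has_real_derivative gd r (fst u r) (deriv (fst u) r)) (at r)"
    using DERIV_cong_ev[OF refl ev refl] d by simp
  thus "deriv (snd (Nvec u)) r = gd r (fst u r) (deriv (fst u) r)" by (rule DERIV_imp_deriv)
qed

definition Q1 :: "(real \<Rightarrow> real) \<Rightarrow> real \<Rightarrow> real" where
  "Q1 U r = U r^4 + U r^6 + U r^8 + U r^2 * (deriv U r)^2 + U r^4 * (deriv U r)^2"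

lemma sqterms1: "(x^2)^2 = x^4" "(\<bar>x\<bar>^3)^2 = x^6" "(x^4)^2 = x^8" "(\<bar>x\<bar>*\<bar>y\<bar>)^2 = x^2*y^2" "(x^2*\<bar>y\<bar>)^2 = x^4*y^2"
  for x y :: real
  by (simp_all add: power_mult_distrib flip: power_mult)

lemma ptA:
  assumes sm: "smooth_radial (fst u)" and r: "0 < r" "r < 1"
  shows "(snd (Nvec u) r)^2 + (deriv (snd (Nvec u)) r)^2 \<le> 90000000 * Q1 (fst u) r"
proof -
  define x where "x = fst u r"
  define dx where "dx = deriv (fst u) r"
  have e: "snd (Nvec u) r = gfx r x" "deriv (snd (Nvec u)) r = gd r x dx"
    using g_facts[OF sm r] unfolding x_def dx_def by auto
  have M0: "0 \<le> M1 x dx" unfolding M1_def by (auto simp: zero_le_even_power)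
  have b1: "\<bar>gfx r x\<bar> \<le> 3000 * M1 x dx" using G1[of r x dx] r M0 by simp
  have b2: "\<bar>gd r x dx\<bar> \<le> 3000 * M1 x dx" using G2[of r x dx] r by simp
  have "(snd (Nvec u) r)^2 + (deriv (snd (Nvec u)) r)^2 \<le> 2 * 3000^2 * (M1 x dx)^2"
    unfolding e by (rule sq2bd[OF b1 b2])
  also have "(M1 x dx)^2 \<le> 5 * Q1 (fst u) r"
  proof -
    have "(M1 x dx)^2 \<le> 5 * ((x^2)^2 + (\<bar>x\<bar>^3)^2 + (x^4)^2 + (\<bar>x\<bar>*\<bar>dx\<bar>)^2 + (x^2*\<bar>dx\<bar>)^2)"
      unfolding M1_def by (rule sq5)
    thus ?thesis unfolding sqterms1 Q1_def x_def dx_def .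
  qed
  hence "2 * 3000^2 * (M1 x dx)^2 \<le> 2 * 3000^2 * (5 * Q1 (fst u) r)" by simp
  finally show ?thesis by simp
qed


lemma goodU_all:
  assumes sm: "smooth_radial U"
  shows "good U" "good (deriv U)"
  using good_U[OF sm] good_dU[OF sm] .

lemma Q1_bound:
  assumes sm: "smooth_radial U"
  shows "J (Q1 U) \<le> (Lp 6 (\<lambda>r. 1)^4 + Lp 18 (\<lambda>r. 1)^6 + Lp 6 (\<lambda>r. 1)^2 + 2)
      * (Lp 12 U ^ 2 + Lp 9 U ^ 3 + Lp 8 U ^ 4 + Lp 4 (deriv U) ^ 2)^2"
proof -
  note gs = goodU_all[OF sm]
  define dU where "dU = deriv U"
  have gU: "good U" and gd: "good dU" using gs unfolding dU_def by auto
  have g1: "good (\<lambda>r. 1)" by (rule good_const)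
  define c6 where "c6 = Lp 6 (\<lambda>r::real. 1::real)"
  define c18 where "c18 = Lp 18 (\<lambda>r::real. 1::real)"
  define a where "a = Lp 12 U"
  define b where "b = Lp 9 U"
  define c where "c = Lp 8 U"
  define d where "d = Lp 4 dU"
  define S where "S = a^2 + b^3 + c^4 + d^2"
  have nn: "0 \<le> a" "0 \<le> b" "0 \<le> c" "0 \<le> d" "0 \<le> c6" "0 \<le> c18"
    unfolding a_def b_def c_def d_def c6_def c18_def by (simp_all add: Lp_nonneg)
  have gp: "good (\<lambda>r. f r ^ n)" if "good f" for f n using good_power[OF that] .
  have e: "J (Q1 U) = J (\<lambda>r. U r^4) + J (\<lambda>r. U r^6) + J (\<lambda>r. U r^8) + J (\<lambda>r. U r^2 * dU r^2) + J (\<lambda>r. U r^4 * dU r^2)"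
    unfolding Q1_def dU_def[symmetric]
    by (simp add: J_add gp gU gd good_add good_mult)
  have t1: "J (\<lambda>r. U r^4) \<le> (a * c6)^4"
  proof -
    have "J (\<lambda>r. U r^4) = Lp 4 U ^ 4" using J_Lp1[OF gp[OF gU]] Lp_pow[of 1 4 U] by (simp add: zero_le_even_power)
    moreover have "Lp 4 U \<le> a * c6"
      using Lp_holder[of 4 3 "3/2" U "\<lambda>r. 1"] gU g1 unfolding a_def c6_def by simp
    ultimately show ?thesis by (simp add: power_mono Lp_nonneg)
  qed
  have t2: "J (\<lambda>r. U r^6) \<le> (b * c18)^6"
  proof -
    have "J (\<lambda>r. U r^6) = Lp 6 U ^ 6" using J_Lp1[OF gp[OF gU]] Lp_pow[of 1 6 U] by (simp add: zero_le_even_power)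
    moreover have "Lp 6 U \<le> b * c18"
      using Lp_holder[of 6 "3/2" 3 U "\<lambda>r. 1"] gU g1 unfolding b_def c18_def by simp
    ultimately show ?thesis by (simp add: power_mono Lp_nonneg)
  qed
  have t3: "J (\<lambda>r. U r^8) = c^8"
    using J_Lp1[OF gp[OF gU]] Lp_pow[of 1 8 U] unfolding c_def by (simp add: zero_le_even_power)
  have t4: "J (\<lambda>r. U r^2 * dU r^2) \<le> (a * c6)^2 * d^2"
  proof -
    have "J (\<lambda>r. U r^2 * dU r^2) = Lp 1 (\<lambda>r. U r^2 * dU r^2)"
      by (rule J_Lp1[OF good_mult[OF gp[OF gU] gp[OF gd]]]) simp
    also have "\<dots> \<le> Lp 2 (\<lambda>r. U r^2) * Lp 2 (\<lambda>r. dU r^2)"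
      using Lp_holder[of 1 2 2 "\<lambda>r. U r^2" "\<lambda>r. dU r^2"] gp[OF gU] gp[OF gd] by simp
    also have "\<dots> = Lp 4 U ^ 2 * d^2" using Lp_pow[of 2 2 U] Lp_pow[of 2 2 dU] unfolding d_def by simp
    also have "\<dots> \<le> (a * c6)^2 * d^2"
    proof -
      have "Lp 4 U \<le> a * c6"
        using Lp_holder[of 4 3 "3/2" U "\<lambda>r. 1"] gU g1 unfolding a_def c6_def by simp
      hence "Lp 4 U ^ 2 \<le> (a*c6)^2" by (simp add: power_mono Lp_nonneg)
      thus ?thesis by (simp add: mult_right_mono)
    qed
    finally show ?thesis .
  qed
  have t5: "J (\<lambda>r. U r^4 * dU r^2) \<le> c^4 * d^2"
  proof -
    have "J (\<lambda>r. U r^4 * dU r^2) = Lp 1 (\<lambda>r. U r^4 * dU r^2)"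
      by (rule J_Lp1[OF good_mult[OF gp[OF gU] gp[OF gd]]]) (simp add: zero_le_even_power)
    also have "\<dots> \<le> Lp 2 (\<lambda>r. U r^4) * Lp 2 (\<lambda>r. dU r^2)"
      using Lp_holder[of 1 2 2 "\<lambda>r. U r^4" "\<lambda>r. dU r^2"] gp[OF gU] gp[OF gd] by simp
    also have "\<dots> = c^4 * d^2" using Lp_pow[of 2 4 U] Lp_pow[of 2 2 dU] unfolding c_def d_def by simp
    finally show ?thesis .
  qed
  have S: "a^2 \<le> S" "b^3 \<le> S" "c^4 \<le> S" "d^2 \<le> S" "0 \<le> S"
    unfolding S_def using nn by (auto simp: zero_le_even_power)
  have sqS: "X^2 \<le> S^2" if "0 \<le> X" "X \<le> S" for X using power_mono[OF that(2) that(1), of 2] .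
  have prS: "X * Y \<le> S^2" if "0 \<le> X" "X \<le> S" "0 \<le> Y" "Y \<le> S" for X Y
    using mult_mono[OF that(2) that(4) S(5) that(3)] by (simp add: power2_eq_square)
  have "(a * c6)^4 = c6^4 * (a^2)^2" by (simp add: power_mult_distrib flip: power_mult)
  also have "\<dots> \<le> c6^4 * S^2" using sqS[of "a^2"] S nn by (intro mult_left_mono) auto
  finally have u1: "(a * c6)^4 \<le> c6^4 * S^2" .
  have "(b * c18)^6 = c18^6 * (b^3)^2" by (simp add: power_mult_distrib flip: power_mult)
  also have "\<dots> \<le> c18^6 * S^2" using sqS[of "b^3"] S nn by (intro mult_left_mono) auto
  finally have u2: "(b * c18)^6 \<le> c18^6 * S^2" .
  have "c^8 = (c^4)^2" by (simp flip: power_mult)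
  also have "\<dots> \<le> S^2" using sqS[of "c^4"] S nn by auto
  finally have u3: "c^8 \<le> S^2" .
  have "(a * c6)^2 * d^2 = c6^2 * (a^2 * d^2)" by (simp add: power_mult_distrib)
  also have "\<dots> \<le> c6^2 * S^2" using prS[of "a^2" "d^2"] S nn by (intro mult_left_mono) auto
  finally have u4: "(a * c6)^2 * d^2 \<le> c6^2 * S^2" .
  have u5: "c^4 * d^2 \<le> S^2" using prS[of "c^4" "d^2"] S nn by auto
  have "J (Q1 U) \<le> c6^4 * S^2 + c18^6 * S^2 + S^2 + c6^2 * S^2 + S^2"
    unfolding e using t1 t2 t3 t4 t5 u1 u2 u3 u4 u5 by linarith
  also have "\<dots> = (c6^4 + c18^6 + c6^2 + 2) * S^2" by (simp add: algebra_simps)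
  finally show ?thesis unfolding S_def a_def b_def c_def d_def c6_def c18_def dU_def .
qed


lemma good_Q1: "smooth_radial U \<Longrightarrow> good (Q1 U)"
proof -
  assume sm: "smooth_radial U"
  note g = goodU_all[OF sm]
  have gp: "good (\<lambda>r. f r ^ n)" if "good f" for f n using good_power[OF that] .
  show ?thesis unfolding Q1_def[abs_def]
    by (intro good_add good_mult gp g)
qed

lemma Q1_nonneg: "0 \<le> Q1 U r"
  unfolding Q1_def by (intro add_nonneg_nonneg mult_nonneg_nonneg) (auto simp: zero_le_even_power)

lemma partA: "\<exists>C>0. \<forall>u::(real \<Rightarrow> real) \<times> (real \<Rightarrow> real). smooth_radial (fst u) \<longrightarrow>
   Hnorm (Nvec u) \<le> C * (Lp 12 (fst u) ^ 2 + Lp 9 (fst u) ^ 3 + Lp 8 (fst u) ^ 4 + Lp 4 (deriv (fst u)) ^ 2)"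
proof -
  define Kc where "Kc = Lp 6 (\<lambda>r::real. 1::real)^4 + Lp 18 (\<lambda>r::real. 1::real)^6 + Lp 6 (\<lambda>r::real. 1::real)^2 + 2"
  have Kc0: "0 \<le> Kc" unfolding Kc_def by (simp add: Lp_nonneg)
  define C where "C = sqrt (90000000 * Kc) + 1"
  have C0: "C > 0" unfolding C_def using Kc0 by (simp add: add_nonneg_pos)
  show ?thesis
  proof (intro exI[of _ C] conjI allI impI C0)
    fix u :: "(real \<Rightarrow> real) \<times> (real \<Rightarrow> real)"
    assume sm: "smooth_radial (fst u)"
    define S where "S = Lp 12 (fst u) ^ 2 + Lp 9 (fst u) ^ 3 + Lp 8 (fst u) ^ 4 + Lp 4 (deriv (fst u)) ^ 2"
    have S0: "0 \<le> S" unfolding S_def by (simp add: Lp_nonneg zero_le_even_power)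
    define g where "g = snd (Nvec u)"
    have gQ: "good (Q1 (fst u))" by (rule good_Q1[OF sm])
    have H1: "H1sq g \<le> 90000000 * J (Q1 (fst u))"
    proof -
      have "H1sq g = integral\<^sup>L MB (\<lambda>x. (g (norm x))^2 + (deriv g (norm x))^2)" by (rule H1sq_MB)
      also have "\<dots> \<le> integral\<^sup>L MB (\<lambda>x. 90000000 * Q1 (fst u) (norm x))"
      proof (rule integral_mono_AE')
        show "integrable MB (\<lambda>x. 90000000 * Q1 (fst u) (norm x))"
          using good_int[OF gQ] by simp
        show "AE x in MB. (g (norm x))^2 + (deriv g (norm x))^2 \<le> 90000000 * Q1 (fst u) (norm x)"
          using AE_MB_nz
        proof eventually_elim
          case (elim x)
          hence "0 < norm x" "norm x < 1" by auto
          thus ?case unfolding g_def by (rule ptA[OF sm])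
        qed
        show "AE x in MB. 0 \<le> 90000000 * Q1 (fst u) (norm x)" by (simp add: Q1_nonneg)
      qed
      also have "\<dots> = 90000000 * J (Q1 (fst u))" unfolding J_def by simp
      finally show ?thesis .
    qed
    have fN: "fst (Nvec u) = (\<lambda>r. 0)" unfolding Nvec_def by simp
    have "Hnorm (Nvec u) = sqrt (H1sq g)" unfolding Hnorm_def fN H2sq_zero g_def by simp
    also have "\<dots> \<le> sqrt (90000000 * (Kc * S^2))"
    proof (rule real_sqrt_le_mono)
      have "J (Q1 (fst u)) \<le> Kc * S^2" using Q1_bound[OF sm] unfolding Kc_def S_def .
      thus "H1sq g \<le> 90000000 * (Kc * S^2)" using H1 by linarith
    qed
    also have "\<dots> = sqrt (90000000 * Kc) * S" using S0 by (simp add: real_sqrt_mult)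
    also have "\<dots> \<le> C * S" unfolding C_def using S0 by (simp add: mult_right_mono)
    finally show "Hnorm (Nvec u) \<le> C * (Lp 12 (fst u) ^ 2 + Lp 9 (fst u) ^ 3 + Lp 8 (fst u) ^ 4 + Lp 4 (deriv (fst u)) ^ 2)"
      unfolding S_def .
  qed
qed


lemma g_deriv:
  assumes sm: "smooth_radial (fst u)" and r: "0 < r" "r < 1"
  shows "(snd (Nvec u) has_real_derivative gd r (fst u r) (deriv (fst u) r)) (at r)"
proof -
  have d: "(gf (fst u) has_real_derivative gd r (fst u r) (deriv (fst u) r)) (at r)"
    by (rule gf_deriv) (use r smooth_props(1)[OF sm] in auto)
  have "eventually (\<lambda>s. s \<in> {0<..}) (nhds r)" using r by (intro eventually_nhds_in_open) auto
  hence ev: "eventually (\<lambda>s. snd (Nvec u) s = gf (fst u) s) (nhds r)"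
    by eventually_elim (simp add: Nvec_eq)
  show ?thesis using DERIV_cong_ev[OF refl ev refl] d by simp
qed

definition Q2 :: "(real \<Rightarrow> real) \<Rightarrow> (real \<Rightarrow> real) \<Rightarrow> real \<Rightarrow> real" where
  "Q2 U V r = (U r - V r)^2*(U r)^2 + (U r - V r)^2*(V r)^2 + (U r - V r)^2*(U r)^4 + (U r - V r)^2*(V r)^4
    + (U r - V r)^2*(U r)^6 + (U r - V r)^2*(V r)^6 + (U r - V r)^2*(deriv U r)^2
    + (U r - V r)^2*((deriv U r)^2*(U r)^2) + (U r - V r)^2*((deriv U r)^2*(V r)^2)
    + (V r)^2*(deriv U r - deriv V r)^2 + (V r)^4*(deriv U r - deriv V r)^2"

lemma sqterms2: "(\<bar>a\<bar>*\<bar>b\<bar>)^2 = a^2*b^2" "(\<bar>a\<bar>*b^2)^2 = a^2*b^4" "(\<bar>a\<bar>*\<bar>b\<bar>^3)^2 = a^2*b^6"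
  "(\<bar>a\<bar>*\<bar>b\<bar>*\<bar>c\<bar>)^2 = a^2*(b^2*c^2)" "(b^2*\<bar>a\<bar>)^2 = b^4*a^2"
  for a b c :: real
  by (simp_all add: power_mult_distrib flip: power_mult)

lemma ptB:
  assumes smu: "smooth_radial (fst u)" and smv: "smooth_radial (fst v)" and r: "0 < r" "r < 1"
  shows "(snd (pdiff (Nvec u) (Nvec v)) r)^2 + (deriv (snd (pdiff (Nvec u) (Nvec v))) r)^2
     \<le> 8800000000 * Q2 (fst u) (fst v) r"
proof -
  define x where "x = fst u r"
  define dx where "dx = deriv (fst u) r"
  define y where "y = fst v r"
  define dy where "dy = deriv (fst v) r"
  have h: "snd (pdiff (Nvec u) (Nvec v)) = (\<lambda>r. snd (Nvec u) r - snd (Nvec v) r)"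
    unfolding pdiff_def by simp
  have e1: "snd (pdiff (Nvec u) (Nvec v)) r = gfx r x - gfx r y"
    unfolding h x_def y_def using g_facts(1)[OF smu r] g_facts(1)[OF smv r] by simp
  have "((\<lambda>r. snd (Nvec u) r - snd (Nvec v) r) has_real_derivative gd r x dx - gd r y dy) (at r)"
    unfolding x_def dx_def y_def dy_def by (intro DERIV_diff g_deriv smu smv r)
  hence e2: "deriv (snd (pdiff (Nvec u) (Nvec v))) r = gd r x dx - gd r y dy"
    unfolding h by (rule DERIV_imp_deriv)
  have M0: "0 \<le> M2 x y dx dy" unfolding M2_def by (auto simp: zero_le_even_power)
  have b1: "\<bar>gfx r x - gfx r y\<bar> \<le> 20000 * M2 x y dx dy" using G3[of r x y dx dy] r M0 by simp
  have b2: "\<bar>gd r x dx - gd r y dy\<bar> \<le> 20000 * M2 x y dx dy" using G4[of r x dx y dy] r by simp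
  have "(snd (pdiff (Nvec u) (Nvec v)) r)^2 + (deriv (snd (pdiff (Nvec u) (Nvec v))) r)^2
      \<le> 2 * 20000^2 * (M2 x y dx dy)^2"
    unfolding e1 e2 by (rule sq2bd[OF b1 b2])
  also have "(M2 x y dx dy)^2 \<le> 11 * Q2 (fst u) (fst v) r"
  proof -
    have "(M2 x y dx dy)^2 \<le> 11 * ((\<bar>x-y\<bar>*\<bar>x\<bar>)^2 + (\<bar>x-y\<bar>*\<bar>y\<bar>)^2 + (\<bar>x-y\<bar>*x^2)^2 + (\<bar>x-y\<bar>*y^2)^2
      + (\<bar>x-y\<bar>*\<bar>x\<bar>^3)^2 + (\<bar>x-y\<bar>*\<bar>y\<bar>^3)^2 + (\<bar>x-y\<bar>*\<bar>dx\<bar>)^2 + (\<bar>x-y\<bar>*\<bar>dx\<bar>*\<bar>x\<bar>)^2 + (\<bar>x-y\<bar>*\<bar>dx\<bar>*\<bar>y\<bar>)^2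
      + (\<bar>y\<bar>*\<bar>dx-dy\<bar>)^2 + (y^2*\<bar>dx-dy\<bar>)^2)"
      unfolding M2_def by (rule sq11)
    thus ?thesis unfolding sqterms2 Q2_def x_def dx_def y_def dy_def .
  qed
  hence "2 * 20000^2 * (M2 x y dx dy)^2 \<le> 2 * 20000^2 * (11 * Q2 (fst u) (fst v) r)" by simp
  finally show ?thesis by simp
qed


lemma holdJ:
  assumes "good f" "good g" "\<And>r. 0 \<le> f r * g r" "1 < s" "1 < t" "1/s + 1/t = 1"
  shows "J (\<lambda>r. f r * g r) \<le> Lp s f * Lp t g"
proof -
  have "J (\<lambda>r. f r * g r) = Lp 1 (\<lambda>r. f r * g r)" by (rule J_Lp1[OF good_mult[OF assms(1,2)] assms(3)])
  also have "\<dots> \<le> Lp (1 * s) f * Lp (1 * t) g" by (rule Lp_holder) (use assms in auto)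
  finally show ?thesis by simp
qed

lemma sqmono: "0 \<le> A \<Longrightarrow> 0 \<le> B \<Longrightarrow> B \<le> B' \<Longrightarrow> A^2 * B^2 \<le> (A * B')^2" for A B B' :: real
  by (simp add: power_mult_distrib mult_left_mono power_mono)

lemma Lp_1holder:
  assumes "good f" "0 < p" "1 < s" "1 < t" "1/s + 1/t = 1"
  shows "Lp p f \<le> Lp (p * s) f * Lp (p * t) (\<lambda>r. 1)"
  using Lp_holder[of p s t f "\<lambda>r. 1"] assms good_const by simp

lemma sqB: "0 \<le> w \<Longrightarrow> 0 \<le> X \<Longrightarrow> 0 \<le> k \<Longrightarrow> X \<le> k * M \<Longrightarrow> w * M \<le> S \<Longrightarrow> (w * X)^2 \<le> k^2 * S^2"
  for w X k M S :: real
proof -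
  assume a: "0 \<le> w" "0 \<le> X" "0 \<le> k" "X \<le> k * M" "w * M \<le> S"
  have "w * X \<le> w * (k * M)" using a by (simp add: mult_left_mono)
  also have "\<dots> = k * (w * M)" by simp
  also have "\<dots> \<le> k * S" using a by (simp add: mult_left_mono)
  finally have "w * X \<le> k * S" .
  hence "(w * X)^2 \<le> (k * S)^2" using a by (intro power_mono) auto
  thus ?thesis by (simp add: power_mult_distrib)
qed

lemma Q2_bound:
  assumes smU: "smooth_radial U" and smV: "smooth_radial V"
  shows "J (Q2 U V) \<le> (2 * Lp 3 (\<lambda>r. 1)^2 + 2 * Lp 12 (\<lambda>r. 1)^4 + 2 * Lp 6 (\<lambda>r. 1)^2 + 5) *
    (Lp 12 (\<lambda>r. U r - V r) * (Lp 12 U + Lp 12 V + Lp 8 U ^ 2 + Lp 8 V ^ 2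
        + Lp 4 (deriv U) * (1 + Lp 6 U + Lp 6 V) + Lp (36/5) U ^ 3 + Lp (36/5) V ^ 3)
     + Lp 4 (\<lambda>r. deriv U r - deriv V r) * (Lp 12 V + Lp 8 V ^ 2))^2"
proof -
  have gU: "good U" and gdU: "good (deriv U)" using goodU_all[OF smU] by auto
  have gV: "good V" and gdV: "good (deriv V)" using goodU_all[OF smV] by auto
  have gW: "good (\<lambda>r. U r - V r)" by (rule good_diff[OF gU gV])
  have gDW: "good (\<lambda>r. deriv U r - deriv V r)" by (rule good_diff[OF gdU gdV])
  have gp: "good (\<lambda>r. f r ^ n)" if "good f" for f n using good_power[OF that] .
  define c3 where "c3 = Lp 3 (\<lambda>r::real. 1::real)"
  define c6 where "c6 = Lp 6 (\<lambda>r::real. 1::real)"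
  define c12 where "c12 = Lp 12 (\<lambda>r::real. 1::real)"
  define LW where "LW = Lp 12 (\<lambda>r. U r - V r)"
  define LDW where "LDW = Lp 4 (\<lambda>r. deriv U r - deriv V r)"
  define Mm where "Mm = Lp 12 U + Lp 12 V + Lp 8 U ^ 2 + Lp 8 V ^ 2
        + Lp 4 (deriv U) * (1 + Lp 6 U + Lp 6 V) + Lp (36/5) U ^ 3 + Lp (36/5) V ^ 3"
  define Nn where "Nn = Lp 12 V + Lp 8 V ^ 2"
  define S where "S = LW * Mm + LDW * Nn"
  have nnL: "0 \<le> Lp p f" for p f by (rule Lp_nonneg)
  have nn: "0 \<le> c3" "0 \<le> c6" "0 \<le> c12" "0 \<le> LW" "0 \<le> LDW" "0 \<le> Mm" "0 \<le> Nn"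
    unfolding c3_def c6_def c12_def LW_def LDW_def Mm_def Nn_def by (simp_all add: nnL)
  have SW: "LW * Mm \<le> S" and SD: "LDW * Nn \<le> S" unfolding S_def using nn by simp_all
  have m5: "Lp 4 (deriv U) \<le> Mm" "Lp 4 (deriv U) * Lp 6 U \<le> Mm" "Lp 4 (deriv U) * Lp 6 V \<le> Mm"
  proof -
    have e: "Lp 4 (deriv U) * (1 + Lp 6 U + Lp 6 V) = Lp 4 (deriv U) + Lp 4 (deriv U) * Lp 6 U + Lp 4 (deriv U) * Lp 6 V"
      by (simp add: algebra_simps)
    have z: "0 \<le> Lp 4 (deriv U) * Lp 6 U" "0 \<le> Lp 4 (deriv U) * Lp 6 V" by (simp_all add: nnL)
    show "Lp 4 (deriv U) \<le> Mm" "Lp 4 (deriv U) * Lp 6 U \<le> Mm" "Lp 4 (deriv U) * Lp 6 V \<le> Mm"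
      unfolding Mm_def e using z nnL[of 12 U] nnL[of 12 V] nnL[of 8 U] nnL[of 8 V] nnL[of "36/5" U] nnL[of "36/5" V]
        nnL[of 4 "deriv U"]
      by (simp_all add: zero_le_even_power zero_le_power)
  qed
  have mU: "Lp 12 U \<le> Mm" "Lp 12 V \<le> Mm" "Lp 8 U ^ 2 \<le> Mm" "Lp 8 V ^ 2 \<le> Mm" "Lp (36/5) U ^ 3 \<le> Mm" "Lp (36/5) V ^ 3 \<le> Mm"
    unfolding Mm_def using nnL[of 12 U] nnL[of 12 V] nnL[of 8 U] nnL[of 8 V] nnL[of "36/5" U] nnL[of "36/5" V]
        nnL[of 4 "deriv U"] nnL[of 6 U] nnL[of 6 V]
    by (simp_all add: zero_le_power)
  have nN: "Lp 12 V \<le> Nn" "Lp 8 V ^ 2 \<le> Nn" unfolding Nn_def by (simp_all add: nnL)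
  have h6: "1 < (6::real)" "1 < (6/5::real)" "1/6 + 1/(6/5) = (1::real)" by simp_all
  have e: "J (Q2 U V) = J (\<lambda>r. (U r - V r)^2*(U r)^2) + J (\<lambda>r. (U r - V r)^2*(V r)^2)
    + J (\<lambda>r. (U r - V r)^2*(U r)^4) + J (\<lambda>r. (U r - V r)^2*(V r)^4)
    + J (\<lambda>r. (U r - V r)^2*(U r)^6) + J (\<lambda>r. (U r - V r)^2*(V r)^6) + J (\<lambda>r. (U r - V r)^2*(deriv U r)^2)
    + J (\<lambda>r. (U r - V r)^2*((deriv U r)^2*(U r)^2)) + J (\<lambda>r. (U r - V r)^2*((deriv U r)^2*(V r)^2))
    + J (\<lambda>r. (V r)^2*(deriv U r - deriv V r)^2) + J (\<lambda>r. (V r)^4*(deriv U r - deriv V r)^2)"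
    unfolding Q2_def by (simp add: J_add gp gU gV gdU gdV good_add good_mult good_diff)
  have TA: "J (\<lambda>r. (U r - V r)^2*(Z r)^2) \<le> c3^2 * S^2" if gZ: "good Z" and mZ: "Lp 12 Z \<le> Mm" for Z
  proof -
    have "J (\<lambda>r. (U r - V r)^2*(Z r)^2) \<le> Lp 6 (\<lambda>r. (U r - V r)^2) * Lp (6/5) (\<lambda>r. (Z r)^2)"
      by (rule holdJ[OF gp[OF gW] gp[OF gZ] _ h6]) simp
    also have "\<dots> = LW^2 * Lp (12/5) Z ^ 2" using Lp_pow[of 6 2 "\<lambda>r. U r - V r"] Lp_pow[of "6/5" 2 Z]
      unfolding LW_def by simp
    also have "\<dots> \<le> (LW * (Lp 12 Z * c3))^2"
      by (rule sqmono) (use Lp_1holder[OF gZ, of "12/5" 5 "5/4"] in \<open>simp_all add: nnL c3_def LW_def\<close>)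
    also have "\<dots> \<le> c3^2 * S^2"
    proof (rule sqB[OF _ _ _ _ SW])
      show "Lp 12 Z * c3 \<le> c3 * Mm" using mult_right_mono[OF mZ nn(1)] by (metis mult.commute)
    qed (use nn in \<open>simp_all add: nnL\<close>)
    finally show ?thesis .
  qed
  have TB: "J (\<lambda>r. (U r - V r)^2*(Z r)^4) \<le> (c12^2)^2 * S^2" if gZ: "good Z" and mZ: "Lp 8 Z ^ 2 \<le> Mm" for Z
  proof -
    have "J (\<lambda>r. (U r - V r)^2*(Z r)^4) \<le> Lp 6 (\<lambda>r. (U r - V r)^2) * Lp (6/5) (\<lambda>r. (Z r)^4)"
      by (rule holdJ[OF gp[OF gW] gp[OF gZ] _ h6]) (simp add: zero_le_even_power)
    also have "\<dots> = LW^2 * (Lp (24/5) Z ^ 2)^2" using Lp_pow[of 6 2 "\<lambda>r. U r - V r"] Lp_pow[of "6/5" 4 Z]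
      unfolding LW_def by (simp flip: power_mult)
    also have "\<dots> \<le> (LW * (Lp 8 Z * c12)^2)^2"
    proof (rule sqmono)
      have "Lp (24/5) Z \<le> Lp 8 Z * c12" using Lp_1holder[OF gZ, of "24/5" "5/3" "5/2"] by (simp add: c12_def)
      thus "Lp (24/5) Z ^ 2 \<le> (Lp 8 Z * c12)^2" by (intro power_mono) (simp_all add: nnL)
    qed (simp_all add: nnL LW_def)
    also have "\<dots> \<le> (c12^2)^2 * S^2"
    proof (rule sqB[OF _ _ _ _ SW])
      have "(Lp 8 Z * c12)^2 = c12^2 * Lp 8 Z ^ 2" by (simp add: power_mult_distrib)
      also have "\<dots> \<le> c12^2 * Mm" by (rule mult_left_mono[OF mZ]) simp
      finally show "(Lp 8 Z * c12)^2 \<le> c12^2 * Mm" .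
    qed (use nn in \<open>simp_all add: nnL\<close>)
    finally show ?thesis .
  qed
  have TC: "J (\<lambda>r. (U r - V r)^2*(Z r)^6) \<le> 1^2 * S^2" if gZ: "good Z" and mZ: "Lp (36/5) Z ^ 3 \<le> Mm" for Z
  proof -
    have "J (\<lambda>r. (U r - V r)^2*(Z r)^6) \<le> Lp 6 (\<lambda>r. (U r - V r)^2) * Lp (6/5) (\<lambda>r. (Z r)^6)"
      by (rule holdJ[OF gp[OF gW] gp[OF gZ] _ h6]) (simp add: zero_le_even_power)
    also have "\<dots> = (LW * Lp (36/5) Z ^ 3)^2" using Lp_pow[of 6 2 "\<lambda>r. U r - V r"] Lp_pow[of "6/5" 6 Z]
      unfolding LW_def by (simp add: power_mult_distrib flip: power_mult)
    also have "\<dots> \<le> 1^2 * S^2"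
      by (rule sqB[OF _ _ _ _ SW]) (use nn mZ in \<open>simp_all add: nnL\<close>)
    finally show ?thesis .
  qed
  have TD: "J (\<lambda>r. (U r - V r)^2*(deriv U r)^2) \<le> c6^2 * S^2"
  proof -
    have "J (\<lambda>r. (U r - V r)^2*(deriv U r)^2) \<le> Lp 6 (\<lambda>r. (U r - V r)^2) * Lp (6/5) (\<lambda>r. (deriv U r)^2)"
      by (rule holdJ[OF gp[OF gW] gp[OF gdU] _ h6]) simp
    also have "\<dots> = LW^2 * Lp (12/5) (deriv U) ^ 2" using Lp_pow[of 6 2 "\<lambda>r. U r - V r"] Lp_pow[of "6/5" 2 "deriv U"]
      unfolding LW_def by simp
    also have "\<dots> \<le> (LW * (Lp 4 (deriv U) * c6))^2"
      by (rule sqmono) (use Lp_1holder[OF gdU, of "12/5" "5/3" "5/2"] in \<open>simp_all add: nnL c6_def LW_def\<close>)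
    also have "\<dots> \<le> c6^2 * S^2"
    proof (rule sqB[OF _ _ _ _ SW])
      show "Lp 4 (deriv U) * c6 \<le> c6 * Mm" using mult_right_mono[OF m5(1) nn(2)] by (metis mult.commute)
    qed (use nn in \<open>simp_all add: nnL\<close>)
    finally show ?thesis .
  qed
  have TE: "J (\<lambda>r. (U r - V r)^2*((deriv U r)^2*(Z r)^2)) \<le> 1^2 * S^2"
    if gZ: "good Z" and mZ: "Lp 4 (deriv U) * Lp 6 Z \<le> Mm" for Z
  proof -
    have "J (\<lambda>r. (U r - V r)^2*((deriv U r)^2*(Z r)^2)) \<le> Lp 6 (\<lambda>r. (U r - V r)^2) * Lp (6/5) (\<lambda>r. (deriv U r)^2*(Z r)^2)"
      by (rule holdJ[OF gp[OF gW] good_mult[OF gp[OF gdU] gp[OF gZ]] _ h6]) simp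
    also have "\<dots> \<le> LW^2 * (Lp 4 (deriv U) * Lp 6 Z)^2"
    proof -
      have "Lp (6/5) (\<lambda>r. (deriv U r)^2*(Z r)^2) \<le> Lp (6/5 * (5/3)) (\<lambda>r. (deriv U r)^2) * Lp (6/5 * (5/2)) (\<lambda>r. (Z r)^2)"
        by (rule Lp_holder[OF _ _ _ _ gp[OF gdU] gp[OF gZ]]) simp_all
      also have "\<dots> = (Lp 4 (deriv U) * Lp 6 Z)^2"
        using Lp_pow[of 2 2 "deriv U"] Lp_pow[of 3 2 Z] by (simp add: power_mult_distrib)
      finally have "Lp (6/5) (\<lambda>r. (deriv U r)^2*(Z r)^2) \<le> (Lp 4 (deriv U) * Lp 6 Z)^2" .
      moreover have "Lp 6 (\<lambda>r. (U r - V r)^2) = LW^2" using Lp_pow[of 6 2 "\<lambda>r. U r - V r"] unfolding LW_def by simp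
      ultimately show ?thesis by (simp add: mult_left_mono)
    qed
    also have "\<dots> = (LW * (Lp 4 (deriv U) * Lp 6 Z))^2" by (simp add: power_mult_distrib)
    also have "\<dots> \<le> 1^2 * S^2"
      by (rule sqB[OF _ _ _ _ SW]) (use nn mZ in \<open>simp_all add: nnL\<close>)
    finally show ?thesis .
  qed
  have TF: "J (\<lambda>r. (V r)^2*(deriv U r - deriv V r)^2) \<le> c6^2 * S^2"
  proof -
    have "J (\<lambda>r. (V r)^2*(deriv U r - deriv V r)^2) \<le> Lp 2 (\<lambda>r. (V r)^2) * Lp 2 (\<lambda>r. (deriv U r - deriv V r)^2)"
      by (rule holdJ[OF gp[OF gV] gp[OF gDW]]) simp_all
    also have "\<dots> = Lp 4 V ^ 2 * LDW^2" using Lp_pow[of 2 2 V] Lp_pow[of 2 2 "\<lambda>r. deriv U r - deriv V r"]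
      unfolding LDW_def by simp
    also have "\<dots> = LDW^2 * Lp 4 V ^ 2" by simp
    also have "\<dots> \<le> (LDW * (Lp 12 V * c6))^2"
      by (rule sqmono) (use Lp_1holder[OF gV, of 4 3 "3/2"] in \<open>simp_all add: nnL c6_def LDW_def\<close>)
    also have "\<dots> \<le> c6^2 * S^2"
    proof (rule sqB[OF _ _ _ _ SD])
      show "Lp 12 V * c6 \<le> c6 * Nn" using mult_right_mono[OF nN(1) nn(2)] by (metis mult.commute)
    qed (use nn in \<open>simp_all add: nnL\<close>)
    finally show ?thesis .
  qed
  have TG: "J (\<lambda>r. (V r)^4*(deriv U r - deriv V r)^2) \<le> 1^2 * S^2"
  proof -
    have "J (\<lambda>r. (V r)^4*(deriv U r - deriv V r)^2) \<le> Lp 2 (\<lambda>r. (V r)^4) * Lp 2 (\<lambda>r. (deriv U r - deriv V r)^2)"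
      by (rule holdJ[OF gp[OF gV] gp[OF gDW]]) (simp_all add: zero_le_even_power)
    also have "\<dots> = (LDW * Lp 8 V ^ 2)^2" using Lp_pow[of 2 4 V] Lp_pow[of 2 2 "\<lambda>r. deriv U r - deriv V r"]
      unfolding LDW_def by (simp add: power_mult_distrib flip: power_mult)
    also have "\<dots> \<le> 1^2 * S^2"
      by (rule sqB[OF _ _ _ _ SD]) (use nn nN in \<open>simp_all add: nnL\<close>)
    finally show ?thesis .
  qed
  have "J (Q2 U V) \<le> c3^2 * S^2 + c3^2 * S^2 + (c12^2)^2 * S^2 + (c12^2)^2 * S^2 + 1^2 * S^2 + 1^2 * S^2
     + c6^2 * S^2 + 1^2 * S^2 + 1^2 * S^2 + c6^2 * S^2 + 1^2 * S^2"
    unfolding e using TA[OF gU mU(1)] TA[OF gV mU(2)] TB[OF gU mU(3)] TB[OF gV mU(4)] TC[OF gU mU(5)] TC[OF gV mU(6)]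
      TD TE[OF gU m5(2)] TE[OF gV m5(3)] TF TG by linarith
  also have "\<dots> = (2 * c3^2 + 2 * c12^4 + 2 * c6^2 + 5) * S^2" by (simp add: algebra_simps flip: power_mult)
  finally show ?thesis unfolding S_def LW_def LDW_def Mm_def Nn_def c3_def c6_def c12_def .
qed


lemma good_Q2: "smooth_radial U \<Longrightarrow> smooth_radial V \<Longrightarrow> good (Q2 U V)"
proof -
  assume smU: "smooth_radial U" and smV: "smooth_radial V"
  note g = goodU_all[OF smU] goodU_all[OF smV]
  have gp: "good (\<lambda>r. f r ^ n)" if "good f" for f n using good_power[OF that] .
  show ?thesis unfolding Q2_def[abs_def]
    by (intro good_add good_mult gp g good_diff)
qed

lemma Q2_nonneg: "0 \<le> Q2 U V r"
  unfolding Q2_def by (intro add_nonneg_nonneg mult_nonneg_nonneg) (auto simp: zero_le_even_power)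

lemma partB: "\<exists>C>0. \<forall>u v :: (real \<Rightarrow> real) \<times> (real \<Rightarrow> real). smooth_radial (fst u) \<and> smooth_radial (fst v) \<longrightarrow>
   Hnorm (pdiff (Nvec u) (Nvec v)) \<le>
        C * (Lp 12 (\<lambda>r. fst u r - fst v r) *
               (Lp 12 (fst u) + Lp 12 (fst v) + Lp 8 (fst u) ^ 2 + Lp 8 (fst v) ^ 2
                + Lp 4 (deriv (fst u)) * (1 + Lp 6 (fst u) + Lp 6 (fst v))
                + Lp (36/5) (fst u) ^ 3 + Lp (36/5) (fst v) ^ 3)
             + Lp 4 (\<lambda>r. deriv (fst u) r - deriv (fst v) r) *
               (Lp 12 (fst v) + Lp 8 (fst v) ^ 2))"
proof -
  define Kc where "Kc = 2 * Lp 3 (\<lambda>r::real. 1::real)^2 + 2 * Lp 12 (\<lambda>r::real. 1::real)^4 + 2 * Lp 6 (\<lambda>r::real. 1::real)^2 + 5"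
  have Kc0: "0 \<le> Kc" unfolding Kc_def by (simp add: Lp_nonneg)
  define C where "C = sqrt (8800000000 * Kc) + 1"
  have C0: "C > 0" unfolding C_def using Kc0 by (simp add: add_nonneg_pos)
  show ?thesis
  proof (intro exI[of _ C] conjI allI impI C0)
    fix u v :: "(real \<Rightarrow> real) \<times> (real \<Rightarrow> real)"
    assume sm: "smooth_radial (fst u) \<and> smooth_radial (fst v)"
    hence smu: "smooth_radial (fst u)" and smv: "smooth_radial (fst v)" by auto
    define S where "S = Lp 12 (\<lambda>r. fst u r - fst v r) *
               (Lp 12 (fst u) + Lp 12 (fst v) + Lp 8 (fst u) ^ 2 + Lp 8 (fst v) ^ 2
                + Lp 4 (deriv (fst u)) * (1 + Lp 6 (fst u) + Lp 6 (fst v))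
                + Lp (36/5) (fst u) ^ 3 + Lp (36/5) (fst v) ^ 3)
             + Lp 4 (\<lambda>r. deriv (fst u) r - deriv (fst v) r) *
               (Lp 12 (fst v) + Lp 8 (fst v) ^ 2)"
    have S0: "0 \<le> S" unfolding S_def by (simp add: Lp_nonneg zero_le_even_power)
    define g where "g = snd (pdiff (Nvec u) (Nvec v))"
    have gQ: "good (Q2 (fst u) (fst v))" by (rule good_Q2[OF smu smv])
    have H1: "H1sq g \<le> 8800000000 * J (Q2 (fst u) (fst v))"
    proof -
      have "H1sq g = integral\<^sup>L MB (\<lambda>x. (g (norm x))^2 + (deriv g (norm x))^2)" by (rule H1sq_MB)
      also have "\<dots> \<le> integral\<^sup>L MB (\<lambda>x. 8800000000 * Q2 (fst u) (fst v) (norm x))"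
      proof (rule integral_mono_AE')
        show "integrable MB (\<lambda>x. 8800000000 * Q2 (fst u) (fst v) (norm x))"
          using good_int[OF gQ] by simp
        show "AE x in MB. (g (norm x))^2 + (deriv g (norm x))^2 \<le> 8800000000 * Q2 (fst u) (fst v) (norm x)"
          using AE_MB_nz
        proof eventually_elim
          case (elim x)
          hence "0 < norm x" "norm x < 1" by auto
          thus ?case unfolding g_def by (rule ptB[OF smu smv])
        qed
        show "AE x in MB. 0 \<le> 8800000000 * Q2 (fst u) (fst v) (norm x)" by (simp add: Q2_nonneg)
      qed
      also have "\<dots> = 8800000000 * J (Q2 (fst u) (fst v))" unfolding J_def by simp
      finally show ?thesis .
    qed
    have fN: "fst (pdiff (Nvec u) (Nvec v)) = (\<lambda>r. 0)" unfolding pdiff_def Nvec_def by simp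
    have "Hnorm (pdiff (Nvec u) (Nvec v)) = sqrt (H1sq g)" unfolding Hnorm_def fN H2sq_zero g_def by simp
    also have "\<dots> \<le> sqrt (8800000000 * (Kc * S^2))"
    proof (rule real_sqrt_le_mono)
      have "J (Q2 (fst u) (fst v)) \<le> Kc * S^2" using Q2_bound[OF smu smv] unfolding Kc_def S_def .
      thus "H1sq g \<le> 8800000000 * (Kc * S^2)" using H1 by linarith
    qed
    also have "\<dots> = sqrt (8800000000 * Kc) * S" using S0 by (simp add: real_sqrt_mult)
    also have "\<dots> \<le> C * S" unfolding C_def using S0 by (simp add: mult_right_mono)
    finally show "Hnorm (pdiff (Nvec u) (Nvec v)) \<le> C * (Lp 12 (\<lambda>r. fst u r - fst v r) *
               (Lp 12 (fst u) + Lp 12 (fst v) + Lp 8 (fst u) ^ 2 + Lp 8 (fst v) ^ 2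
                + Lp 4 (deriv (fst u)) * (1 + Lp 6 (fst u) + Lp 6 (fst v))
                + Lp (36/5) (fst u) ^ 3 + Lp (36/5) (fst v) ^ 3)
             + Lp 4 (\<lambda>r. deriv (fst u) r - deriv (fst v) r) *
               (Lp 12 (fst v) + Lp 8 (fst v) ^ 2))"
      unfolding S_def .
  qed
qed

theorem mainTheorem12:
  shows "\<exists>C>0. \<forall>u v :: (real \<Rightarrow> real) \<times> (real \<Rightarrow> real).
    smooth_radial (fst u) \<and> smooth_radial (snd u) \<and>
    smooth_radial (fst v) \<and> smooth_radial (snd v) \<longrightarrow>
      Hnorm (Nvec u) \<le> C * (Lp 12 (fst u) ^ 2 + Lp 9 (fst u) ^ 3 + Lp 8 (fst u) ^ 4
                              + Lp 4 (deriv (fst u)) ^ 2)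
    \<and> Hnorm (pdiff (Nvec u) (Nvec v)) \<le>
        C * (Lp 12 (\<lambda>r. fst u r - fst v r) *
               (Lp 12 (fst u) + Lp 12 (fst v) + Lp 8 (fst u) ^ 2 + Lp 8 (fst v) ^ 2
                + Lp 4 (deriv (fst u)) * (1 + Lp 6 (fst u) + Lp 6 (fst v))
                + Lp (36/5) (fst u) ^ 3 + Lp (36/5) (fst v) ^ 3)
             + Lp 4 (\<lambda>r. deriv (fst u) r - deriv (fst v) r) *
               (Lp 12 (fst v) + Lp 8 (fst v) ^ 2))"
proof -
  obtain CA where CA: "CA > 0" "\<forall>u::(real \<Rightarrow> real) \<times> (real \<Rightarrow> real). smooth_radial (fst u) \<longrightarrow>
   Hnorm (Nvec u) \<le> CA * (Lp 12 (fst u) ^ 2 + Lp 9 (fst u) ^ 3 + Lp 8 (fst u) ^ 4 + Lp 4 (deriv (fst u)) ^ 2)"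
    using partA by blast
  obtain CB where CB: "CB > 0" "\<forall>u v :: (real \<Rightarrow> real) \<times> (real \<Rightarrow> real). smooth_radial (fst u) \<and> smooth_radial (fst v) \<longrightarrow>
   Hnorm (pdiff (Nvec u) (Nvec v)) \<le>
        CB * (Lp 12 (\<lambda>r. fst u r - fst v r) *
               (Lp 12 (fst u) + Lp 12 (fst v) + Lp 8 (fst u) ^ 2 + Lp 8 (fst v) ^ 2
                + Lp 4 (deriv (fst u)) * (1 + Lp 6 (fst u) + Lp 6 (fst v))
                + Lp (36/5) (fst u) ^ 3 + Lp (36/5) (fst v) ^ 3)
             + Lp 4 (\<lambda>r. deriv (fst u) r - deriv (fst v) r) *
               (Lp 12 (fst v) + Lp 8 (fst v) ^ 2))"
    using partB by blast
  show ?thesis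
  proof (intro exI[of _ "max CA CB"] conjI allI impI)
    show "0 < max CA CB" using CA by simp
  next
    fix u v :: "(real \<Rightarrow> real) \<times> (real \<Rightarrow> real)"
    assume a: "smooth_radial (fst u) \<and> smooth_radial (snd u) \<and> smooth_radial (fst v) \<and> smooth_radial (snd v)"
    define SA where "SA = Lp 12 (fst u) ^ 2 + Lp 9 (fst u) ^ 3 + Lp 8 (fst u) ^ 4 + Lp 4 (deriv (fst u)) ^ 2"
    define SB where "SB = Lp 12 (\<lambda>r. fst u r - fst v r) *
               (Lp 12 (fst u) + Lp 12 (fst v) + Lp 8 (fst u) ^ 2 + Lp 8 (fst v) ^ 2
                + Lp 4 (deriv (fst u)) * (1 + Lp 6 (fst u) + Lp 6 (fst v))
                + Lp (36/5) (fst u) ^ 3 + Lp (36/5) (fst v) ^ 3)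
             + Lp 4 (\<lambda>r. deriv (fst u) r - deriv (fst v) r) *
               (Lp 12 (fst v) + Lp 8 (fst v) ^ 2)"
    have SA0: "0 \<le> SA" unfolding SA_def by (simp add: Lp_nonneg zero_le_even_power)
    have SB0: "0 \<le> SB" unfolding SB_def by (simp add: Lp_nonneg zero_le_even_power)
    have "Hnorm (Nvec u) \<le> CA * SA" using CA(2) a unfolding SA_def by blast
    also have "\<dots> \<le> max CA CB * SA" using SA0 by (intro mult_right_mono) auto
    finally show "Hnorm (Nvec u) \<le> max CA CB * (Lp 12 (fst u) ^ 2 + Lp 9 (fst u) ^ 3 + Lp 8 (fst u) ^ 4
                              + Lp 4 (deriv (fst u)) ^ 2)" unfolding SA_def .
    have "Hnorm (pdiff (Nvec u) (Nvec v)) \<le> CB * SB" using CB(2) a unfolding SB_def by blast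
    also have "\<dots> \<le> max CA CB * SB" using SB0 by (intro mult_right_mono) auto
    finally show "Hnorm (pdiff (Nvec u) (Nvec v)) \<le>
        max CA CB * (Lp 12 (\<lambda>r. fst u r - fst v r) *
               (Lp 12 (fst u) + Lp 12 (fst v) + Lp 8 (fst u) ^ 2 + Lp 8 (fst v) ^ 2
                + Lp 4 (deriv (fst u)) * (1 + Lp 6 (fst u) + Lp 6 (fst v))
                + Lp (36/5) (fst u) ^ 3 + Lp (36/5) (fst v) ^ 3)
             + Lp 4 (\<lambda>r. deriv (fst u) r - deriv (fst v) r) *
               (Lp 12 (fst v) + Lp 8 (fst v) ^ 2))" unfolding SB_def .
  qed
qed


end
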